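(* With notation as in the context, $\mathbb M=\widetilde{\mathbb M}_1$; that is, for $g\in\mathbb G$, the function $\phi(g;\cdot)$ has a nondegenerate critical point in $\Omega_*$ if and only if the set of global maximizers of $\phi(g;\cdot)$ in $\Omega_*$ consists of exactly one point.
   Context: Let $q,m\ge1$, $U^{(1)},\dots,U^{(m)}$ linearly independent real skew-symmetric $q\times q$ matrices, $\mathbb G=\mathbb R^q\times\mathbb R^m$. $U(\tau)=i\sum_j\tau_jU^{(j)}$, $\Omega_*=\{\tau\in\mathbb R^m:\|U(\tau)\|<\pi\}$ (operator norm), and for $g=(x,t)$, $\phi(g;\tau)=\langle U(\tau)\cot U(\tau)x,x\rangle+4t\cdot\tau$, $\tau\in\Omega_*$ (a smooth concave function). $\mathbb M=\{g:\ \exists\theta\in\Omega_*$ with $\nabla_\tau\phi(g;\theta)=0$ and $\det\mathrm{Hess}_\tau\phi(g;\theta)\neq0\}$. $\widetilde{\mathbb M}_1=\{g:$ the set of global maximizers of $\phi(g;\cdot)$ in $\Omega_*$ is a singleton$\}$. *)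

theory Defs
  imports "HOL-Analysis.Analysis"
begin

text \<open>Powers of square matrices.\<close>
primrec cmatpow :: "complex^'q^'q \<Rightarrow> nat \<Rightarrow> complex^'q^'q" where
  "cmatpow A 0 = mat 1"
| "cmatpow A (Suc n) = A ** cmatpow A n"

text \<open>U(tau) = i * sum_j tau_j U^(j), a complex (Hermitian) q x q matrix.\<close>
definition Umat :: "('m::finite \<Rightarrow> real^'q^'q) \<Rightarrow> real^'m \<Rightarrow> complex^'q^'q" where
  "Umat Us \<tau> = (\<chi> a b. \<Sum>j\<in>UNIV. Complex 0 (\<tau>$j) * complex_of_real ((Us j)$a$b))"

text \<open>Matrix function U cot U = cos(U) * (sin(U)/U)^(-1), both factors given by
  their (entire) power series; for norm U < pi the second factor is invertible.\<close>
definition UcotU :: "complex^'q^'q \<Rightarrow> complex^'q^'q" where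
  "UcotU A =
     (\<Sum>k. ((-1)^k / fact (2*k)) *\<^sub>R cmatpow A (2*k)) **
     matrix_inv (\<Sum>k. ((-1)^k / fact (2*k+1)) *\<^sub>R cmatpow A (2*k))"

text \<open>Omega_* = {tau. operator norm of U(tau) < pi}.\<close>
definition Omega :: "('m::finite \<Rightarrow> real^'q^'q) \<Rightarrow> (real^'m) set" where
  "Omega Us = {\<tau>. onorm (\<lambda>v. Umat Us \<tau> *v v) < pi}"

text \<open>phi(g;tau) = <U cot U x, x> + 4 t.tau  with g = (x,t).\<close>
definition phi :: "('m::finite \<Rightarrow> real^'q^'q) \<Rightarrow> real^'q \<Rightarrow> real^'m \<Rightarrow> real^'m \<Rightarrow> real" where
  "phi Us x t \<tau> =
     Re (\<Sum>i\<in>UNIV. (UcotU (Umat Us \<tau>) *v (\<chi> k. complex_of_real (x$k))) $ i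
                     * cnj (complex_of_real (x$i)))
     + 4 * (t \<bullet> \<tau>)"

text \<open>Partial derivatives, gradient condition and Hessian matrix.\<close>
definition partial :: "(real^'m \<Rightarrow> real) \<Rightarrow> 'm \<Rightarrow> real^'m \<Rightarrow> real" where
  "partial f i \<tau> = deriv (\<lambda>s. f (\<tau> + s *\<^sub>R axis i 1)) 0"

definition hess :: "(real^'m \<Rightarrow> real) \<Rightarrow> real^'m \<Rightarrow> real^'m^'m" where
  "hess f \<tau> = (\<chi> i j. partial (\<lambda>\<sigma>. partial f j \<sigma>) i \<tau>)"

end

theory Submission
  imports Defs
begin

(* ---- ML1 ---- *)

lemma reflection_real:
  fixes z :: real assumes "0 < z" "z < 1"
  shows "Gamma z * Gamma (1 - z) = pi / sin (pi * z)"
proof -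
  have "complex_of_real (Gamma z * Gamma (1 - z)) = complex_of_real (pi / sin (pi * z))"
    using Gamma_reflection_complex[of "of_real z"]
    by (simp flip: Gamma_complex_of_real sin_of_real)
  then show ?thesis by (simp only: of_real_eq_iff)
qed

lemma not_nonpos_Int_pos: "(x::real) > 0 \<Longrightarrow> x \<notin> \<int>\<^sub>\<le>\<^sub>0"
  by (auto elim!: nonpos_Ints_cases)

lemma div_aux: "(G::real) \<noteq> 0 \<Longrightarrow> G * D = R \<Longrightarrow> D = R / G"
  by (simp add: field_simps)

lemma digamma_reflection_real:
  fixes z :: real assumes z: "0 < z" "z < 1"
  shows "Digamma (1 - z) - Digamma z = pi * cot (pi * z)"
proof -
  have s: "sin (pi * z) \<noteq> 0"
    using z sin_gt_zero[of "pi * z"] by (simp add: mult_less_cancel_left1)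
  have g1: "Gamma z > 0" "Gamma (1 - z) > 0" using z by auto
  have d1: "((\<lambda>s. Gamma s * Gamma (1 - s)) has_field_derivative
        (Gamma z * Digamma z * Gamma (1 - z) + Gamma z * (Gamma (1 - z) * Digamma (1 - z) * (-1)))) (at z)"
    using z not_nonpos_Int_pos[of z] not_nonpos_Int_pos[of "1 - z"]
    by (auto intro!: derivative_eq_intros)
  have d2: "((\<lambda>s. pi / sin (pi * s)) has_field_derivative
        (- (pi * (cos (pi * z) * pi)) / (sin (pi * z))\<^sup>2)) (at z)"
    using s by (auto intro!: derivative_eq_intros simp: power2_eq_square)
  have d1': "((\<lambda>s. pi / sin (pi * s)) has_field_derivative
        (Gamma z * Digamma z * Gamma (1 - z) + Gamma z * (Gamma (1 - z) * Digamma (1 - z) * (-1)))) (at z)"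
    by (rule has_field_derivative_transform_within_open[OF d1, of "{0<..<1}"])
       (use z reflection_real in auto)
  have eq: "Gamma z * Gamma (1 - z) * (Digamma z - Digamma (1 - z)) = - (pi * (cos (pi * z) * pi)) / (sin (pi * z))\<^sup>2"
    using DERIV_unique[OF d1' d2] by (simp add: algebra_simps)
  have Gnz: "Gamma z * Gamma (1 - z) \<noteq> 0" using g1 by simp
  have "Digamma z - Digamma (1 - z) = - (pi * (cos (pi * z) * pi)) / (sin (pi * z))\<^sup>2 / (Gamma z * Gamma (1 - z))"
    using div_aux[OF Gnz eq] .
  also have "\<dots> = - pi * cot (pi * z)"
    using reflection_real[OF z] s pi_gt_zero by (simp add: cot_def field_simps power2_eq_square)
  finally show ?thesis by simp
qed

lemma cot_sums_real:
  fixes z :: real assumes z: "0 < z" "z < 1"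
  shows "(\<lambda>k. inverse (z + real k) - inverse (1 - z + real k)) sums (pi * cot (pi * z))"
proof -
  have a: "(\<lambda>k. inverse (real (Suc k)) - inverse ((1 - z) + real k)) sums (Digamma (1 - z) + euler_mascheroni)"
    using summable_Digamma[of "1 - z"] z by (simp add: Digamma_def summable_sums)
  have b: "(\<lambda>k. inverse (real (Suc k)) - inverse (z + real k)) sums (Digamma z + euler_mascheroni)"
    using summable_Digamma[of z] z by (simp add: Digamma_def summable_sums)
  from sums_diff[OF a b] digamma_reflection_real[OF z] show ?thesis by simp
qed

lemma MLpartial:
  fixes z :: real assumes z: "0 < z" "z < 1"
  shows "(\<Sum>k<Suc N. z * inverse (z + real k) - z * inverse (1 - z + real k))
         = 1 - (\<Sum>n<N. z / (real n + 1 - z) - z / (real n + 1 + z)) - z / (real N + 1 - z)"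
proof (induction N)
  case 0
  then show ?case using z by (simp add: field_simps)
next
  case (Suc N)
  have "(\<Sum>k<Suc (Suc N). z * inverse (z + real k) - z * inverse (1 - z + real k))
     = (\<Sum>k<Suc N. z * inverse (z + real k) - z * inverse (1 - z + real k))
       + (z * inverse (z + real (Suc N)) - z * inverse (1 - z + real (Suc N)))" by simp
  also have "\<dots> = 1 - (\<Sum>n<N. z / (real n + 1 - z) - z / (real n + 1 + z)) - z / (real N + 1 - z)
       + (z * inverse (z + real (Suc N)) - z * inverse (1 - z + real (Suc N)))" using Suc by simp
  also have "\<dots> = 1 - (\<Sum>n<Suc N. z / (real n + 1 - z) - z / (real n + 1 + z)) - z / (real (Suc N) + 1 - z)"
    by (simp add: field_simps)
  finally show ?case .
qed

lemma cot_ML: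
  fixes mu :: real assumes mu: "0 < mu" "mu < pi"
  shows "(\<lambda>n. 2 * mu\<^sup>2 / ((real (Suc n) * pi)\<^sup>2 - mu\<^sup>2)) sums (1 - mu * cot mu)"
proof -
  define z where "z = mu / pi"
  have z: "0 < z" "z < 1" using mu by (auto simp: z_def)
  have mz: "mu = pi * z" using z_def by simp
  have S: "(\<lambda>k. z * inverse (z + real k) - z * inverse (1 - z + real k)) sums (mu * cot mu)"
    using sums_mult[OF cot_sums_real[OF z], of z] by (simp add: mz algebra_simps)
  then have S1: "(\<lambda>N. \<Sum>k<Suc N. z * inverse (z + real k) - z * inverse (1 - z + real k)) \<longlonglongrightarrow> mu * cot mu"
    unfolding sums_def by (rule LIMSEQ_Suc)
  have L0: "(\<lambda>N. z / (real N + 1 - z)) \<longlonglongrightarrow> 0"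
  proof -
    have ev: "\<forall>\<^sub>F N in sequentially. z / (real N + 1 - z) \<le> z / real N"
      using eventually_gt_at_top[of "0::nat"]
      by eventually_elim (use z in \<open>auto intro!: divide_left_mono\<close>)
    have ev0: "\<forall>\<^sub>F N in sequentially. 0 \<le> z / (real N + 1 - z)"
      using z by auto
    show ?thesis
      by (rule tendsto_sandwich[OF ev0 ev tendsto_const lim_const_over_n])
  qed
  have "(\<lambda>N. 1 - (\<Sum>k<Suc N. z * inverse (z + real k) - z * inverse (1 - z + real k)) - z / (real N + 1 - z))
        \<longlonglongrightarrow> 1 - mu * cot mu - 0"
    by (intro tendsto_intros S1 L0)
  moreover have "(\<lambda>N. 1 - (\<Sum>k<Suc N. z * inverse (z + real k) - z * inverse (1 - z + real k)) - z / (real N + 1 - z))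
      = (\<lambda>N. \<Sum>n<N. z / (real n + 1 - z) - z / (real n + 1 + z))"
    using MLpartial[OF z] by (auto simp: algebra_simps)
  ultimately have T: "(\<lambda>n. z / (real n + 1 - z) - z / (real n + 1 + z)) sums (1 - mu * cot mu)"
    by (simp add: sums_def)
  have "z / (real n + 1 - z) - z / (real n + 1 + z) = 2 * mu\<^sup>2 / ((real (Suc n) * pi)\<^sup>2 - mu\<^sup>2)" for n
  proof -
    have a: "real n + 1 - z > 0" "real n + 1 + z > 0" using z by auto
    have "z / (real n + 1 - z) - z / (real n + 1 + z) = 2 * z\<^sup>2 / ((real n + 1)\<^sup>2 - z\<^sup>2)"
      using a by (simp add: field_simps power2_eq_square)
    also have "\<dots> = 2 * mu\<^sup>2 / ((real (Suc n) * pi)\<^sup>2 - mu\<^sup>2)"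
    proof -
      have e1: "(real (Suc n) * pi)\<^sup>2 - mu\<^sup>2 = pi\<^sup>2 * ((real n + 1)\<^sup>2 - z\<^sup>2)"
        by (simp add: mz power2_eq_square algebra_simps)
      have e2: "2 * mu\<^sup>2 = pi\<^sup>2 * (2 * z\<^sup>2)" by (simp add: mz power_mult_distrib)
      show ?thesis unfolding e1 e2 using pi_gt_zero by simp
    qed
    finally show ?thesis .
  qed
  then show ?thesis using T by simp
qed


(* ---- Spec ---- *)

lemma eps_aux:
  fixes a b :: real assumes "a \<ge> 0" "\<And>e. e > 0 \<Longrightarrow> 2 * a \<le> e * b" shows "a = 0"
proof (rule ccontr)
  assume "a \<noteq> 0" then have a: "a > 0" using assms(1) by simp
  define e where "e = a / (\<bar>b\<bar> + 1)"
  have e: "e > 0" using a by (simp add: e_def)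
  have "e * b \<le> e * \<bar>b\<bar>" using e by (simp add: mult_left_mono)
  also have "\<dots> < a" using a by (simp add: e_def field_simps)
  finally show False using assms(2)[OF e] a by simp
qed

lemma eig_span:
  fixes M :: "real^'n^'n"
  assumes sym: "\<And>a b. (M *v a) \<bullet> b = a \<bullet> (M *v b)"
  shows "span {v. \<exists>l. M *v v = l *\<^sub>R v} = UNIV"
proof (rule ccontr)
  define Eg where "Eg = {v. \<exists>l. M *v v = l *\<^sub>R v}"
  assume "span {v. \<exists>l. M *v v = l *\<^sub>R v} \<noteq> UNIV"
  then obtain x where x: "x \<notin> span Eg" unfolding Eg_def by auto
  define V where "V = {y. \<forall>e \<in> Eg. orthogonal e y}"
  have subV: "subspace V" unfolding V_def by (rule subspace_orthogonal_to_vectors)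
  obtain y z where yz: "y \<in> span Eg" "\<And>w. w \<in> span Eg \<Longrightarrow> orthogonal z w" "x = y + z"
    using orthogonal_subspace_decomp_exists[of Eg x] by metis
  have zV: "z \<in> V" unfolding V_def
  proof (intro CollectI ballI)
    fix e assume "e \<in> Eg"
    then have "orthogonal z e" using yz(2) span_base by blast
    then show "orthogonal e z" by (simp add: orthogonal_commute)
  qed
  have znz: "z \<noteq> 0" using x yz by auto
  have Vspan: "v \<in> V \<Longrightarrow> w \<in> span Eg \<Longrightarrow> w \<bullet> v = 0" for v w
  proof -
    assume v: "v \<in> V" and w: "w \<in> span Eg"
    have "orthogonal v w"
    proof (rule orthogonal_to_span[OF w])
      fix y assume "y \<in> Eg"
      then have "orthogonal y v" using v unfolding V_def by blast
      then show "orthogonal v y" by (simp add: orthogonal_commute)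
    qed
    then show "w \<bullet> v = 0" by (simp add: orthogonal_def inner_commute)
  qed
  have inv: "M *v v \<in> V" if "v \<in> V" for v
    unfolding V_def orthogonal_def
  proof (intro CollectI ballI)
    fix e assume "e \<in> Eg"
    then obtain l where l: "M *v e = l *\<^sub>R e" unfolding Eg_def by auto
    have ev: "e \<bullet> v = 0" using that \<open>e \<in> Eg\<close> unfolding V_def orthogonal_def by auto
    have "e \<bullet> (M *v v) = (M *v e) \<bullet> v" using sym by simp
    also have "\<dots> = l * (e \<bullet> v)" using l by simp
    finally show "e \<bullet> (M *v v) = 0" using ev by simp
  qed
  define K where "K = V \<inter> sphere 0 1"
  have cK: "compact K" unfolding K_def
    by (rule closed_Int_compact[OF closed_subspace[OF subV] compact_sphere])
  have neK: "K \<noteq> {}"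
  proof -
    have "(1 / norm z) *\<^sub>R z \<in> K" unfolding K_def using znz zV subspace_scale[OF subV zV]
      by simp
    then show ?thesis by auto
  qed
  have cont: "continuous_on K (\<lambda>v. (M *v v) \<bullet> v)"
    by (intro continuous_intros)
  obtain v0 where v0: "v0 \<in> K" "\<And>v. v \<in> K \<Longrightarrow> (M *v v) \<bullet> v \<le> (M *v v0) \<bullet> v0"
    using continuous_attains_sup[OF cK neK cont] by blast
  define mu where "mu = (M *v v0) \<bullet> v0"
  have v0V: "v0 \<in> V" and nv0: "norm v0 = 1" using v0(1) unfolding K_def by auto
  have bound: "(M *v v) \<bullet> v \<le> mu * (norm v)\<^sup>2" if "v \<in> V" for v
  proof (cases "v = 0")
    case True then show ?thesis by simp
  next
    case False
    let ?u = "(1 / norm v) *\<^sub>R v"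
    have "?u \<in> K" unfolding K_def using False subspace_scale[OF subV that] by simp
    then have "(M *v ?u) \<bullet> ?u \<le> mu" using v0(2) mu_def by blast
    moreover have "(M *v ?u) \<bullet> ?u = ((M *v v) \<bullet> v) / (norm v)\<^sup>2"
    proof -
      have "M *v ?u = (1 / norm v) *\<^sub>R (M *v v)" by (rule matrix_vector_mult_scaleR)
      then show ?thesis by (simp add: power2_eq_square)
    qed
    ultimately have "((M *v v) \<bullet> v) / (norm v)\<^sup>2 \<le> mu" by simp
    then show ?thesis using False by (simp add: divide_le_eq mult.commute)
  qed
  define w where "w = M *v v0 - mu *\<^sub>R v0"
  have wV: "w \<in> V" unfolding w_def
    by (intro subspace_diff[OF subV] inv v0V subspace_scale[OF subV v0V])
  have v0w: "v0 \<bullet> w = 0"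
    unfolding w_def using nv0 by (simp add: inner_diff_right mu_def inner_commute dot_square_norm)
  have Mv0w: "(M *v v0) \<bullet> w = w \<bullet> w"
  proof -
    have "M *v v0 = w + mu *\<^sub>R v0" by (simp add: w_def)
    moreover have "w \<bullet> v0 = 0" using v0w by (simp add: inner_commute)
    ultimately show ?thesis using v0w by (simp add: inner_add_left)
  qed
  have "w \<bullet> w = 0"
  proof (rule eps_aux)
    show "w \<bullet> w \<ge> 0" by simp
    fix e :: real assume e: "e > 0"
    have "v0 + e *\<^sub>R w \<in> V" by (intro subspace_add[OF subV v0V] subspace_scale[OF subV wV])
    from bound[OF this]
    have "(M *v (v0 + e *\<^sub>R w)) \<bullet> (v0 + e *\<^sub>R w) \<le> mu * (norm (v0 + e *\<^sub>R w))\<^sup>2" .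
    moreover have "(M *v (v0 + e *\<^sub>R w)) \<bullet> (v0 + e *\<^sub>R w)
        = mu + 2 * e * (w \<bullet> w) + e\<^sup>2 * ((M *v w) \<bullet> w)"
    proof -
      have "(M *v w) \<bullet> v0 = (M *v v0) \<bullet> w" using sym[of w v0] by (simp add: inner_commute)
      then show ?thesis
        by (simp add: matrix_vector_right_distrib matrix_vector_mult_scaleR inner_add_left
            inner_add_right mu_def Mv0w power2_eq_square algebra_simps)
    qed
    moreover have "(norm (v0 + e *\<^sub>R w))\<^sup>2 = 1 + e\<^sup>2 * (w \<bullet> w)"
    proof -
      have a: "(v0 + e *\<^sub>R w) \<bullet> (v0 + e *\<^sub>R w) = v0 \<bullet> v0 + e * (v0 \<bullet> w) + e * (w \<bullet> v0) + e * e * (w \<bullet> w)"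
        by (simp add: inner_add_left inner_add_right algebra_simps)
      have b: "v0 \<bullet> v0 = 1" using nv0 by (simp add: power2_norm_eq_inner[symmetric])
      have c: "w \<bullet> v0 = 0" using v0w by (simp add: inner_commute)
      show ?thesis unfolding power2_norm_eq_inner a b c v0w by (simp add: power2_eq_square)
    qed
    ultimately have "2 * e * (w \<bullet> w) \<le> e\<^sup>2 * (mu * (w \<bullet> w) - (M *v w) \<bullet> w)"
      by (simp add: algebra_simps)
    then have "e * (2 * (w \<bullet> w)) \<le> e * (e * (mu * (w \<bullet> w) - (M *v w) \<bullet> w))"
      by (simp add: power2_eq_square algebra_simps)
    then show "2 * (w \<bullet> w) \<le> e * (mu * (w \<bullet> w) - (M *v w) \<bullet> w)"
      using e by simp
  qed
  then have "w = 0" by simp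
  then have "v0 \<in> Eg" unfolding Eg_def w_def by auto
  then have "v0 \<bullet> v0 = 0" using Vspan[OF v0V span_base] by simp
  then show False using nv0 by simp
qed


(* ---- Lin ---- *)

lemma neg_mv: "(- B) *v v = - (B *v (v::'a::comm_ring_1^'n))"
  by (simp add: matrix_vector_mult_def vec_eq_iff sum_negf)

lemma skew_dot:
  fixes B :: "real^'n^'n" assumes "transpose B = - B"
  shows "(B *v a) \<bullet> b = - (a \<bullet> (B *v b))"
proof -
  have "(B *v a) \<bullet> b = (a v* transpose B) \<bullet> b" by simp
  also have "\<dots> = a \<bullet> (transpose B *v b)" by (rule dot_lmul_matrix)
  also have "transpose B *v b = - (B *v b)" using assms
    by (simp add: neg_mv)
  finally show ?thesis by simp
qed

lemma matrix_inv_props: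
  fixes X :: "real^'n^'n" assumes "invertible X"
  shows "X ** matrix_inv X = mat 1" "matrix_inv X ** X = mat 1"
proof -
  have "\<exists>X'. X ** X' = mat 1 \<and> X' ** X = mat 1" using assms unfolding invertible_def .
  then have "X ** matrix_inv X = mat 1 \<and> matrix_inv X ** X = mat 1"
    unfolding matrix_inv_def by (rule someI_ex)
  then show "X ** matrix_inv X = mat 1" "matrix_inv X ** X = mat 1" by auto
qed


locale skewsys =
  fixes Us :: "'m::finite \<Rightarrow> real^'q::finite^'q"
  assumes skew: "\<forall>j. transpose (Us j) = - Us j"
begin

definition A :: "real^'m \<Rightarrow> real^'q^'q" where "A s = (\<Sum>j\<in>UNIV. (s$j) *\<^sub>R Us j)"
definition M :: "real^'m \<Rightarrow> real^'q^'q" where "M s = - (A s ** A s)"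
definition rho :: "real^'m \<Rightarrow> real" where "rho s = onorm ((*v) (A s))"
definition Q :: "real \<Rightarrow> real^'m \<Rightarrow> real^'q^'q" where "Q c s = matrix_inv (c *\<^sub>R mat 1 - M s)"
definition KA :: real where "KA = (\<Sum>j\<in>UNIV. onorm ((*v) (Us j)))"

lemma transpose_A: "transpose (A s) = - A s"
proof -
  have e: "Us j $ b $ a = - (Us j $ a $ b)" for j a b
  proof -
    have "transpose (Us j) $ a $ b = (- Us j) $ a $ b" using skew by simp
    then show ?thesis by (simp add: transpose_def)
  qed
  have c: "A s $ a $ b = (\<Sum>j\<in>UNIV. s$j * Us j $ a $ b)" for a b
    by (simp add: A_def sum_component)
  have "transpose (A s) $ a $ b = (- A s) $ a $ b" for a b
  proof -
    have "transpose (A s) $ a $ b = A s $ b $ a" by (simp add: transpose_def)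
    also have "\<dots> = (\<Sum>j\<in>UNIV. s$j * (- (Us j $ a $ b)))"
    proof -
      have "s$j * Us j $ b $ a = s$j * (- (Us j $ a $ b))" for j using e[of j a b] by simp
      then show ?thesis unfolding c by (rule sum.cong[OF refl])
    qed
    also have "\<dots> = - A s $ a $ b" by (simp add: c sum_negf)
    finally show ?thesis by simp
  qed
  then show ?thesis by (simp add: vec_eq_iff)
qed

lemma A_add: "A (s + h) = A s + A h"
  by (simp add: A_def scaleR_add_left sum.distrib)
lemma A_scale: "A (c *\<^sub>R s) = c *\<^sub>R A s"
  by (simp add: A_def scaleR_sum_right)
lemma A_diff: "A (s - h) = A s - A h"
  by (simp add: A_def scaleR_diff_left sum_subtractf)
lemma A_zero: "A 0 = 0"
  by (simp add: A_def)

lemma A_skew: "(A s *v a) \<bullet> b = - (a \<bullet> (A s *v b))"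
  by (rule skew_dot[OF transpose_A])

lemma Mv: "M s *v v = - (A s *v (A s *v v))"
  by (simp add: M_def matrix_vector_mul_assoc neg_mv)

lemma M_dot: "(M s *v a) \<bullet> b = (A s *v a) \<bullet> (A s *v b)"
  unfolding Mv using A_skew[of s "A s *v a" b] by simp

lemma M_sym: "(M s *v a) \<bullet> b = a \<bullet> (M s *v b)"
  unfolding M_dot using M_dot[of s b a] by (simp add: inner_commute)

lemma rho_nonneg: "rho s \<ge> 0"
  unfolding rho_def by (rule onorm_pos_le) simp

lemma A_bound: "norm (A s *v v) \<le> rho s * norm v"
  unfolding rho_def by (rule onorm) simp

lemma M_bound: "norm (M s *v v) \<le> (rho s)\<^sup>2 * norm v"
proof -
  have "norm (M s *v v) = norm (A s *v (A s *v v))" by (simp add: Mv)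
  also have "\<dots> \<le> rho s * norm (A s *v v)" by (rule A_bound)
  also have "\<dots> \<le> rho s * (rho s * norm v)" by (rule mult_left_mono[OF A_bound rho_nonneg])
  finally show ?thesis by (simp add: power2_eq_square)
qed

lemma M_dot_le: "(M s *v v) \<bullet> v \<le> (rho s)\<^sup>2 * (norm v)\<^sup>2"
proof -
  have "(M s *v v) \<bullet> v = (norm (A s *v v))\<^sup>2" by (simp add: M_dot power2_norm_eq_inner)
  also have "\<dots> \<le> (rho s * norm v)\<^sup>2" by (rule power_mono[OF A_bound]) simp
  finally show ?thesis by (simp add: power_mult_distrib)
qed

lemma M_dot_nonneg: "(M s *v v) \<bullet> v \<ge> 0"
  by (simp add: M_dot)

lemma A_lin_bound: "norm (A h *v v) \<le> KA * norm h * norm v"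
proof -
  have "A h *v v = (\<Sum>j\<in>UNIV. (h$j) *\<^sub>R (Us j *v v))"
  proof -
    have "(\<Sum>j\<in>UNIV. (h$j) *\<^sub>R Us j) *v v = (\<Sum>j\<in>UNIV. (h$j) *\<^sub>R Us j *v v)"
      by (induction rule: infinite_finite_induct) (auto simp: matrix_vector_mult_add_rdistrib)
    then show ?thesis by (simp add: A_def scaleR_matrix_vector_assoc)
  qed
  then have "norm (A h *v v) \<le> (\<Sum>j\<in>UNIV. norm ((h$j) *\<^sub>R (Us j *v v)))"
    by (metis norm_sum)
  also have "\<dots> \<le> (\<Sum>j\<in>UNIV. norm h * (onorm ((*v) (Us j)) * norm v))"
  proof (rule sum_mono)
    fix j
    have "norm ((h$j) *\<^sub>R (Us j *v v)) = \<bar>h$j\<bar> * norm (Us j *v v)" by simp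
    also have "\<dots> \<le> norm h * (onorm ((*v) (Us j)) * norm v)"
      by (intro mult_mono component_le_norm_cart onorm) auto
    finally show "norm ((h$j) *\<^sub>R (Us j *v v)) \<le> norm h * (onorm ((*v) (Us j)) * norm v)" .
  qed
  also have "\<dots> = KA * norm h * norm v" by (simp add: KA_def sum_distrib_left sum_distrib_right algebra_simps)
  finally show ?thesis .
qed

lemma KA_nonneg: "KA \<ge> 0"
  unfolding KA_def by (intro sum_nonneg onorm_pos_le) simp

lemma rho_le: "rho s \<le> KA * norm s"
  unfolding rho_def by (rule onorm_le) (use A_lin_bound in auto)

lemma rho_add: "rho (s + h) \<le> rho s + KA * norm h"
proof -
  have "(*v) (A (s+h)) = (\<lambda>v. A s *v v + A h *v v)"
    by (rule ext) (simp add: A_add matrix_vector_mult_add_rdistrib)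
  then have "rho (s + h) = onorm (\<lambda>v. A s *v v + A h *v v)"
    by (simp add: rho_def)
  also have "\<dots> \<le> rho s + rho h"
    unfolding rho_def by (rule onorm_triangle) simp_all
  finally show ?thesis using rho_le[of h] by simp
qed

lemma K_mv: "(c *\<^sub>R mat 1 - M s) *v v = c *\<^sub>R v - M s *v v"
  by (simp add: matrix_vector_mult_diff_rdistrib scaleR_matrix_vector_assoc[symmetric])

lemma K_sym: "((c *\<^sub>R mat 1 - M s) *v a) \<bullet> b = a \<bullet> ((c *\<^sub>R mat 1 - M s) *v b)"
  unfolding K_mv by (simp add: inner_diff_left inner_diff_right M_sym)

lemma K_coerc:
  "((c *\<^sub>R mat 1 - M s) *v v) \<bullet> v \<ge> (c - (rho s)\<^sup>2) * (norm v)\<^sup>2"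
proof -
  have "((c *\<^sub>R mat 1 - M s) *v v) \<bullet> v = c * (norm v)\<^sup>2 - (M s *v v) \<bullet> v"
    unfolding K_mv by (simp add: inner_diff_left power2_norm_eq_inner)
  then show ?thesis using M_dot_le[of s v] by (simp add: algebra_simps)
qed

lemma K_norm:
  assumes c: "c > (rho s)\<^sup>2"
  shows "norm ((c *\<^sub>R mat 1 - M s) *v v) \<ge> (c - (rho s)\<^sup>2) * norm v"
proof (cases "v = 0")
  case True then show ?thesis by simp
next
  case False
  have "(c - (rho s)\<^sup>2) * (norm v)\<^sup>2 \<le> ((c *\<^sub>R mat 1 - M s) *v v) \<bullet> v" by (rule K_coerc)
  also have "\<dots> \<le> norm ((c *\<^sub>R mat 1 - M s) *v v) * norm v" by (rule norm_cauchy_schwarz)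
  finally have "((c - (rho s)\<^sup>2) * norm v) * norm v \<le> norm ((c *\<^sub>R mat 1 - M s) *v v) * norm v"
    by (simp add: power2_eq_square mult.assoc)
  then show ?thesis using False by simp
qed

lemma K_invertible:
  assumes c: "c > (rho s)\<^sup>2"
  shows "invertible (c *\<^sub>R mat 1 - M s)"
proof -
  let ?K = "c *\<^sub>R mat 1 - M s"
  have lin: "linear ((*v) ?K)" by (simp add: matrix_vector_mul_linear)
  have inj: "inj ((*v) ?K)"
  proof (rule injI)
    fix a b assume "?K *v a = ?K *v b"
    then have "?K *v (a - b) = 0" by (simp add: matrix_vector_mult_diff_distrib)
    then have "(c - (rho s)\<^sup>2) * norm (a - b) \<le> 0" using K_norm[OF c, of "a - b"] by simp
    then have "norm (a - b) \<le> 0" using c by (simp add: mult_le_0_iff)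
    then show "a = b" by simp
  qed
  have "surj ((*v) ?K)" by (rule linear_inj_imp_surj[OF lin inj])
  then show ?thesis using inj by (simp add: invertible_eq_bij bij_def)
qed

lemma Q_left:
  assumes c: "c > (rho s)\<^sup>2"
  shows "(c *\<^sub>R mat 1 - M s) *v (Q c s *v v) = v"
  using matrix_inv_props(1)[OF K_invertible[OF c]]
  by (simp add: Q_def matrix_vector_mul_assoc)

lemma Q_right:
  assumes c: "c > (rho s)\<^sup>2"
  shows "Q c s *v ((c *\<^sub>R mat 1 - M s) *v v) = v"
  using matrix_inv_props(2)[OF K_invertible[OF c]]
  by (simp add: Q_def matrix_vector_mul_assoc)

lemma Q_eq:
  assumes c: "c > (rho s)\<^sup>2" and "(c *\<^sub>R mat 1 - M s) *v y = x"
  shows "Q c s *v x = y"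
  using Q_right[OF c, of y] assms(2) by simp

lemma Q_bound:
  assumes c: "c > (rho s)\<^sup>2"
  shows "norm (Q c s *v v) \<le> norm v / (c - (rho s)\<^sup>2)"
proof -
  have "(c - (rho s)\<^sup>2) * norm (Q c s *v v) \<le> norm v"
    using K_norm[OF c, of "Q c s *v v"] Q_left[OF c] by simp
  then show ?thesis using c by (simp add: field_simps)
qed

lemma Q_sym:
  assumes c: "c > (rho s)\<^sup>2"
  shows "(Q c s *v a) \<bullet> b = a \<bullet> (Q c s *v b)"
proof -
  have "(Q c s *v a) \<bullet> b = (Q c s *v a) \<bullet> ((c *\<^sub>R mat 1 - M s) *v (Q c s *v b))"
    using Q_left[OF c] by simp
  also have "\<dots> = ((c *\<^sub>R mat 1 - M s) *v (Q c s *v a)) \<bullet> (Q c s *v b)"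
    by (simp add: K_sym)
  also have "\<dots> = a \<bullet> (Q c s *v b)" using Q_left[OF c] by simp
  finally show ?thesis .
qed

lemma Q_pos:
  assumes c: "c > (rho s)\<^sup>2"
  shows "(Q c s *v z) \<bullet> z \<ge> (c - (rho s)\<^sup>2) * (norm (Q c s *v z))\<^sup>2"
proof -
  have "(Q c s *v z) \<bullet> z = ((c *\<^sub>R mat 1 - M s) *v (Q c s *v z)) \<bullet> (Q c s *v z)"
    using Q_left[OF c] by (simp add: inner_commute)
  then show ?thesis using K_coerc by simp
qed

lemma Q_pos_zero:
  assumes c: "c > (rho s)\<^sup>2" and "(Q c s *v z) \<bullet> z = 0"
  shows "z = 0"
proof -
  have "(c - (rho s)\<^sup>2) * (norm (Q c s *v z))\<^sup>2 \<le> 0" using Q_pos[OF c, of z] assms(2) by simp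
  then have "norm (Q c s *v z) = 0" using c
    by (metis diff_gt_0_iff_gt mult_le_0_iff not_less power2_less_eq_zero_iff zero_less_norm_iff)
  then have "Q c s *v z = 0" by simp
  then show ?thesis using Q_left[OF c, of z] by simp
qed

end

(* ---- Emb ---- *)

definition cemb :: "real^'n^'m \<Rightarrow> complex^'n^'m" where
  "cemb X = (\<chi> a b. complex_of_real (X $ a $ b))"
definition vemb :: "real^'n \<Rightarrow> complex^'n" where
  "vemb v = (\<chi> a. complex_of_real (v $ a))"

primrec rpow :: "real^'n^'n \<Rightarrow> nat \<Rightarrow> real^'n^'n" where
  "rpow X 0 = mat 1"
| "rpow X (Suc k) = X ** rpow X k"

lemma cemb_mult: "cemb (X ** Y) = cemb X ** cemb Y"
  by (simp add: cemb_def matrix_matrix_mult_def vec_eq_iff)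

lemma cemb_mv: "cemb X *v vemb v = vemb (X *v v)"
  by (simp add: cemb_def vemb_def matrix_vector_mult_def vec_eq_iff)

lemma cemb_mat1: "cemb (mat 1 :: real^'n^'n) = mat 1"
  by (simp add: cemb_def mat_def vec_eq_iff)

lemma cemb_add: "cemb (X + Y) = cemb X + cemb Y"
  by (simp add: cemb_def vec_eq_iff)

lemma cemb_scaleR: "cemb (c *\<^sub>R X) = c *\<^sub>R cemb X"
  by (simp add: cemb_def vec_eq_iff of_real_def)

lemma norm_cemb: "norm (cemb X) = norm X"
proof -
  have "norm (cemb X $ a) = norm (X $ a)" for a
    by (simp add: cemb_def norm_vec_def L2_set_def)
  then show ?thesis by (simp add: norm_vec_def L2_set_def)
qed

lemma norm_vemb: "norm (vemb v) = norm v"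
  by (simp add: vemb_def norm_vec_def L2_set_def)

lemma bl_cemb: "bounded_linear (cemb :: real^'n^'m \<Rightarrow> complex^'n^'m)"
  by (rule bounded_linear_intro[of _ 1]) (auto simp: cemb_add cemb_scaleR norm_cemb)

lemma matrix_inv_unique:
  fixes X Y :: "'a::field^'n^'n"
  assumes "X ** Y = mat 1" "Y ** X = mat 1"
  shows "matrix_inv X = Y"
proof -
  have "\<exists>X'. X ** X' = mat 1 \<and> X' ** X = mat 1" using assms by blast
  then have h: "X ** matrix_inv X = mat 1 \<and> matrix_inv X ** X = mat 1"
    unfolding matrix_inv_def by (rule someI_ex)
  have "matrix_inv X = (Y ** X) ** matrix_inv X" using assms by simp
  also have "\<dots> = Y ** (X ** matrix_inv X)" by (simp add: matrix_mul_assoc)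
  also have "\<dots> = Y" using h by simp
  finally show ?thesis .
qed

lemma cemb_matrix_inv:
  fixes S :: "real^'n^'n"
  assumes "invertible S"
  shows "matrix_inv (cemb S) = cemb (matrix_inv S)"
  using matrix_inv_props[OF assms]
  by (intro matrix_inv_unique) (simp_all add: cemb_mult[symmetric] cemb_mat1)

context skewsys begin

lemma Umat_eq: "Umat Us s = (\<chi> a b. \<i> * complex_of_real (A s $ a $ b))"
proof -
  have e: "Complex 0 t = \<i> * complex_of_real t" for t by (simp add: complex_eq_iff)
  show ?thesis
    by (simp add: Umat_def A_def vec_eq_iff sum_component sum_distrib_left e mult.assoc)
qed

lemma Umat_sq: "Umat Us s ** Umat Us s = cemb (M s)"
proof -
  have "(Umat Us s ** Umat Us s) $ a $ b = cemb (M s) $ a $ b" for a b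
  proof -
    have "(Umat Us s ** Umat Us s) $ a $ b
       = (\<Sum>k\<in>UNIV. (\<i> * complex_of_real (A s $ a $ k)) * (\<i> * complex_of_real (A s $ k $ b)))"
      by (simp add: Umat_eq matrix_matrix_mult_def)
    also have "\<dots> = (\<Sum>k\<in>UNIV. - complex_of_real (A s $ a $ k * A s $ k $ b))"
      by (intro sum.cong refl) (simp add: algebra_simps)
    also have "\<dots> = cemb (M s) $ a $ b"
      by (simp add: cemb_def M_def matrix_matrix_mult_def sum_negf)
    finally show ?thesis .
  qed
  then show ?thesis by (simp add: vec_eq_iff)
qed

lemma cmatpow_even: "cmatpow (Umat Us s) (2 * k) = cemb (rpow (M s) k)"
proof (induction k)
  case 0 then show ?case by (simp add: cemb_mat1)
next
  case (Suc k)
  have "cmatpow (Umat Us s) (2 * Suc k) = Umat Us s ** (Umat Us s ** cmatpow (Umat Us s) (2 * k))"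
    by simp
  also have "\<dots> = cemb (M s) ** cemb (rpow (M s) k)"
    by (simp add: matrix_mul_assoc Umat_sq Suc)
  finally show ?case by (simp add: cemb_mult)
qed

end

(* ---- Rep ---- *)

lemma summable_inv_sq: "summable (\<lambda>n. inverse ((real (Suc n))\<^sup>2))"
proof -
  have "summable (\<lambda>n. inverse ((real n)^2))" using inverse_power_summable[of 2] by simp
  then show ?thesis by (subst summable_Suc_iff[where f = "\<lambda>n. inverse ((real n)^2)"])
qed

definition cn :: "nat \<Rightarrow> real" where "cn n = (real (Suc n) * pi)\<^sup>2"

lemma cn_gap:
  assumes "0 \<le> r" "r < pi"
  shows "cn n - r\<^sup>2 \<ge> (real (Suc n))\<^sup>2 * (pi\<^sup>2 - r\<^sup>2)"
proof -
  have "(real (Suc n))\<^sup>2 \<ge> 1" by simp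
  then have i: "(real (Suc n))\<^sup>2 * r\<^sup>2 \<ge> r\<^sup>2" by (simp add: mult_le_cancel_right1)
  have e: "cn n = (real (Suc n))\<^sup>2 * pi\<^sup>2" by (simp add: cn_def power_mult_distrib)
  have "(real (Suc n))\<^sup>2 * (pi\<^sup>2 - r\<^sup>2) = (real (Suc n))\<^sup>2 * pi\<^sup>2 - (real (Suc n))\<^sup>2 * r\<^sup>2"
    by (simp add: right_diff_distrib)
  then show ?thesis using e i by linarith
qed

lemma cn_gt: assumes "0 \<le> r" "r < pi" shows "cn n > r\<^sup>2"
proof -
  have "pi\<^sup>2 - r\<^sup>2 > 0" using assms by (simp add: power_strict_mono)
  then have "(real (Suc n))\<^sup>2 * (pi\<^sup>2 - r\<^sup>2) > 0" by simp
  then show ?thesis using cn_gap[OF assms, of n] by simp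
qed

lemma rpow_onorm: "onorm ((*v) (rpow X k)) \<le> onorm ((*v) (X::real^'n^'n)) ^ k"
proof (induction k)
  case 0
  have "(*v) (mat 1 :: real^'n^'n) = (\<lambda>x. x)" by (rule ext) simp
  then show ?case using onorm_id_le by simp
next
  case (Suc k)
  have "(*v) (rpow X (Suc k)) = (*v) X \<circ> (*v) (rpow X k)"
    by (rule ext) (simp add: matrix_vector_mul_assoc)
  then have "onorm ((*v) (rpow X (Suc k))) \<le> onorm ((*v) X) * onorm ((*v) (rpow X k))"
    using onorm_compose[of "(*v) X" "(*v) (rpow X k)"] by simp
  also have "\<dots> \<le> onorm ((*v) X) * onorm ((*v) X) ^ k"
    by (intro mult_left_mono Suc onorm_pos_le) simp
  finally show ?case by simp
qed

lemma norm_matrix_onorm: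
  "norm (X::real^'n^'m) \<le> real CARD('m) * real CARD('n) * onorm ((*v) X)"
proof -
  have "norm X \<le> (\<Sum>i\<in>UNIV. norm (X $ i))"
    unfolding norm_vec_def by (rule L2_set_le_sum) simp
  also have "\<dots> \<le> (\<Sum>i\<in>(UNIV::'m set). (\<Sum>j\<in>(UNIV::'n set). onorm ((*v) X)))"
  proof (rule sum_mono)
    fix i
    have "norm (X $ i) \<le> (\<Sum>j\<in>UNIV. \<bar>X $ i $ j\<bar>)" by (rule norm_le_l1_cart)
    also have "\<dots> \<le> (\<Sum>j\<in>(UNIV::'n set). onorm ((*v) X))"
      by (intro sum_mono matrix_component_le_onorm)
    finally show "norm (X $ i) \<le> (\<Sum>j\<in>(UNIV::'n set). onorm ((*v) X))" .
  qed
  also have "\<dots> = real CARD('m) * real CARD('n) * onorm ((*v) X)" by simp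
  finally show ?thesis .
qed

lemma summable_matpow_series:
  fixes X :: "real^'n^'n"
  assumes a: "\<And>k. \<bar>a k\<bar> \<le> inverse (fact k)"
  shows "summable (\<lambda>k. a k *\<^sub>R rpow X k)"
proof -
  define C where "C = real CARD('n) * real CARD('n)"
  define m where "m = onorm ((*v) X)"
  have m0: "m \<ge> 0" unfolding m_def by (rule onorm_pos_le) simp
  have "summable (\<lambda>k. C * (inverse (fact k) * m ^ k))"
    by (intro summable_mult summable_exp)
  then show ?thesis
  proof (rule summable_comparison_test'[where N = 0])
    fix k :: nat
    have "norm (a k *\<^sub>R rpow X k) = \<bar>a k\<bar> * norm (rpow X k)" by simp
    also have "\<dots> \<le> inverse (fact k) * (C * m ^ k)"
    proof (rule mult_mono[OF a])
      have "norm (rpow X k) \<le> C * onorm ((*v) (rpow X k))"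
        unfolding C_def by (rule norm_matrix_onorm)
      also have "\<dots> \<le> C * m ^ k" unfolding m_def
        by (intro mult_left_mono rpow_onorm) (simp add: C_def)
      finally show "norm (rpow X k) \<le> C * m ^ k" .
    qed simp_all
    finally show "norm (a k *\<^sub>R rpow X k) \<le> C * (inverse (fact k) * m ^ k)" by (simp add: algebra_simps)
  qed
qed

lemma coef_cos_bound: "\<bar>(-1)^k / fact (2*k) :: real\<bar> \<le> inverse (fact k)"
proof -
  have "fact k \<le> (fact (2*k) :: real)" by (intro fact_mono) simp
  then have "inverse (fact (2*k)) \<le> (inverse (fact k) :: real)" by (intro le_imp_inverse_le) simp_all
  moreover have "\<bar>(-1)^k / fact (2*k) :: real\<bar> = inverse (fact (2*k))" by (simp add: abs_mult power_abs divide_inverse)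
  ultimately show ?thesis by simp
qed

lemma coef_sin_bound: "\<bar>(-1)^k / fact (2*k+1) :: real\<bar> \<le> inverse (fact k)"
proof -
  have "fact k \<le> (fact (2*k+1) :: real)" by (intro fact_mono) simp
  then have "inverse (fact (2*k+1)) \<le> (inverse (fact k) :: real)" by (intro le_imp_inverse_le) simp_all
  moreover have "\<bar>(-1)^k / fact (2*k+1) :: real\<bar> = inverse (fact (2*k+1))"
  proof -
    have "\<bar>(-1)^k / fact (2*k+1) :: real\<bar> = \<bar>(-1)^k :: real\<bar> / \<bar>fact (2*k+1) :: real\<bar>" by (rule abs_divide)
    also have "\<dots> = 1 / fact (2*k+1)" by (simp add: power_abs)
    finally show ?thesis by (simp add: divide_inverse)
  qed
  ultimately show ?thesis by simp
qed

lemma bl_mv_left: "bounded_linear (\<lambda>X::real^'n^'m. X *v v)"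
proof -
  have "linear (\<lambda>X::real^'n^'m. X *v v)"
    by (intro linearI) (simp_all add: matrix_vector_mult_add_rdistrib scaleR_matrix_vector_assoc)
  then show ?thesis by (simp add: linear_conv_bounded_linear)
qed

lemma rpow_eig: "X *v v = l *\<^sub>R v \<Longrightarrow> rpow X k *v v = (l ^ k) *\<^sub>R v"
  by (induction k) (simp_all add: matrix_vector_mul_assoc[symmetric] matrix_vector_mult_scaleR)

lemma series_eig:
  assumes S: "summable (\<lambda>k. a k *\<^sub>R rpow X k)" and e: "X *v v = l *\<^sub>R v"
    and L: "(\<lambda>k. a k * l ^ k) sums L"
  shows "(\<Sum>k. a k *\<^sub>R rpow X k) *v v = L *\<^sub>R v"
proof -
  have "(\<lambda>k. (a k *\<^sub>R rpow X k) *v v) sums ((\<Sum>k. a k *\<^sub>R rpow X k) *v v)"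
    by (rule bounded_linear.sums[OF bl_mv_left summable_sums[OF S]])
  moreover have "(\<lambda>k. (a k *\<^sub>R rpow X k) *v v) = (\<lambda>k. (a k * l ^ k) *\<^sub>R v)"
    by (rule ext) (simp add: scaleR_matrix_vector_assoc[symmetric] rpow_eig[OF e])
  moreover have "(\<lambda>k. (a k * l ^ k) *\<^sub>R v) sums (L *\<^sub>R v)"
    by (rule sums_scaleR_left[OF L])
  ultimately show ?thesis using sums_unique2 by metis
qed

definition sincv :: "real \<Rightarrow> real" where
  "sincv l = (if l = 0 then 1 else sin (sqrt l) / sqrt l)"

lemma cos_coef_sums: "0 \<le> l \<Longrightarrow> (\<lambda>k. (-1)^k / fact (2*k) * l ^ k) sums cos (sqrt l)"
proof -
  assume l: "0 \<le> l"
  have "(sqrt l) ^ (2 * k) = l ^ k" for k using l by (simp add: power_mult)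
  then show ?thesis using cos_series[of "sqrt l"] by simp
qed

lemma sin_coef_sums: "0 \<le> l \<Longrightarrow> (\<lambda>k. (-1)^k / fact (2*k+1) * l ^ k) sums sincv l"
proof -
  assume l: "0 \<le> l"
  show ?thesis
  proof (cases "l = 0")
    case True
    have "(\<lambda>k. (-1)^k / fact (2*k+1) * (0::real) ^ k) sums ((-1)^0 / fact (2*0+1))"
      by (rule powser_sums_zero)
    then show ?thesis using True by (simp add: sincv_def)
  next
    case False
    have "(sqrt l) ^ (2 * k) = l ^ k" for k using l by (simp add: power_mult)
    then show ?thesis using sin_z_over_z_series[of "sqrt l"] False l by (simp add: sincv_def)
  qed
qed

lemma sincv_pos: "0 \<le> l \<Longrightarrow> l < pi\<^sup>2 \<Longrightarrow> sincv l > 0"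
proof -
  assume l: "0 \<le> l" "l < pi\<^sup>2"
  have "sqrt l < pi" using l real_sqrt_less_iff[of l "pi^2"] by simp
  then show ?thesis using l by (auto simp: sincv_def intro!: divide_pos_pos sin_gt_zero)
qed

lemma half_aux: "(2 * x / y) / 2 = x / (y::real)"
  by (cases "y = 0") (simp_all add: field_simps)

lemma MLl:
  assumes "0 \<le> l" "l < pi\<^sup>2"
  shows "(\<lambda>n. l / (cn n - l)) sums ((1 - cos (sqrt l) / sincv l) / 2)"
proof (cases "l = 0")
  case True then show ?thesis by (simp add: sincv_def)
next
  case False
  define mu where "mu = sqrt l"
  have mu: "0 < mu" "mu < pi" using assms False real_sqrt_less_iff[of l "pi^2"] by (auto simp: mu_def)
  have l: "l = mu\<^sup>2" using assms by (simp add: mu_def)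
  have "(\<lambda>n. 2 * mu\<^sup>2 / ((real (Suc n) * pi)\<^sup>2 - mu\<^sup>2)) sums (1 - mu * cot mu)" by (rule cot_ML[OF mu])
  from sums_divide[OF this, of 2]
  have "(\<lambda>n. 2 * mu\<^sup>2 / ((real (Suc n) * pi)\<^sup>2 - mu\<^sup>2) / 2) sums ((1 - mu * cot mu) / 2)" .
  moreover have "(\<lambda>n. 2 * mu\<^sup>2 / ((real (Suc n) * pi)\<^sup>2 - mu\<^sup>2) / 2) = (\<lambda>n. l / (cn n - l))"
    by (rule ext) (simp only: l cn_def half_aux)
  ultimately have "(\<lambda>n. l / (cn n - l)) sums ((1 - mu * cot mu) / 2)" by simp
  moreover have "cos (sqrt l) / sincv l = mu * cot mu"
    using False mu by (simp add: sincv_def mu_def[symmetric] cot_def)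
  ultimately show ?thesis by simp
qed


(* ---- Rep2 ---- *)

context skewsys begin

definition Cm :: "real^'m \<Rightarrow> real^'q^'q" where
  "Cm s = (\<Sum>k. ((-1)^k / fact (2*k)) *\<^sub>R rpow (M s) k)"
definition Sm :: "real^'m \<Rightarrow> real^'q^'q" where
  "Sm s = (\<Sum>k. ((-1)^k / fact (2*k+1)) *\<^sub>R rpow (M s) k)"

lemma Cm_summable: "summable (\<lambda>k. ((-1)^k / fact (2*k)) *\<^sub>R rpow (M s) k)"
  by (rule summable_matpow_series[OF coef_cos_bound])
lemma Sm_summable: "summable (\<lambda>k. ((-1)^k / fact (2*k+1)) *\<^sub>R rpow (M s) k)"
  by (rule summable_matpow_series[OF coef_sin_bound])

lemma eig_bounds:
  assumes e: "M s *v v = l *\<^sub>R v" and v: "v \<noteq> 0"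
  shows "0 \<le> l" "l \<le> (rho s)\<^sup>2"
proof -
  have d: "(M s *v v) \<bullet> v = l * (norm v)\<^sup>2" by (simp add: e power2_norm_eq_inner)
  have n: "(norm v)\<^sup>2 > 0" using v by simp
  show "0 \<le> l" using M_dot_nonneg[of s v] d n by (simp add: zero_le_mult_iff)
  show "l \<le> (rho s)\<^sup>2" using M_dot_le[of s v] d n by simp
qed

lemma Cm_eig: "M s *v v = l *\<^sub>R v \<Longrightarrow> 0 \<le> l \<Longrightarrow> Cm s *v v = cos (sqrt l) *\<^sub>R v"
  unfolding Cm_def by (rule series_eig[OF Cm_summable _ cos_coef_sums])
lemma Sm_eig: "M s *v v = l *\<^sub>R v \<Longrightarrow> 0 \<le> l \<Longrightarrow> Sm s *v v = sincv l *\<^sub>R v"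
  unfolding Sm_def by (rule series_eig[OF Sm_summable _ sin_coef_sums])

lemma eig_span_M: "span {v. \<exists>l. M s *v v = l *\<^sub>R v} = UNIV"
  by (rule eig_span) (rule M_sym)

lemma Sm_invertible:
  assumes r: "rho s < pi"
  shows "invertible (Sm s)"
proof -
  have sub: "{v. \<exists>l. M s *v v = l *\<^sub>R v} \<subseteq> range ((*v) (Sm s))"
  proof
    fix v assume "v \<in> {v. \<exists>l. M s *v v = l *\<^sub>R v}"
    then obtain l where e: "M s *v v = l *\<^sub>R v" by auto
    show "v \<in> range ((*v) (Sm s))"
    proof (cases "v = 0")
      case True then show ?thesis by (metis matrix_vector_mult_0_right rangeI)
    next
      case False
      note lb = eig_bounds[OF e False]
      have "(rho s)\<^sup>2 < pi\<^sup>2" by (rule power_strict_mono[OF r rho_nonneg]) simp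
      then have "l < pi\<^sup>2" using lb(2) by linarith
      then have sp: "sincv l > 0" using sincv_pos lb(1) by simp
      have "Sm s *v ((1 / sincv l) *\<^sub>R v) = v"
        using Sm_eig[OF e lb(1)] sp by (simp add: matrix_vector_mult_scaleR)
      then show ?thesis by (metis rangeI)
    qed
  qed
  have lin: "linear ((*v) (Sm s))" by (simp add: matrix_vector_mul_linear)
  have "subspace (range ((*v) (Sm s)))"
    by (rule linear_subspace_image[OF lin subspace_UNIV])
  then have "span {v. \<exists>l. M s *v v = l *\<^sub>R v} \<subseteq> range ((*v) (Sm s))"
    by (rule span_minimal[OF sub])
  then have su: "surj ((*v) (Sm s))" using eig_span_M by auto
  then have "inj ((*v) (Sm s))" by (rule linear_surj_imp_inj[OF lin])
  then show ?thesis using su by (simp add: invertible_eq_bij bij_def)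
qed

lemma Q_eig:
  assumes e: "M s *v v = l *\<^sub>R v" and c: "c > (rho s)\<^sup>2"
  shows "Q c s *v v = (1 / (c - l)) *\<^sub>R v"
proof (cases "v = 0")
  case True then show ?thesis by simp
next
  case False
  have cl: "c - l > 0" using eig_bounds(2)[OF e False] c by simp
  have "(c *\<^sub>R mat 1 - M s) *v ((1 / (c - l)) *\<^sub>R v) = (1 / (c - l)) *\<^sub>R (c *\<^sub>R v - l *\<^sub>R v)"
    by (simp only: matrix_vector_mult_scaleR K_mv e)
  also have "\<dots> = (1 / (c - l)) *\<^sub>R ((c - l) *\<^sub>R v)" by (simp add: scaleR_diff_left)
  also have "\<dots> = v" using cl by simp
  finally show ?thesis by (intro Q_eq[OF c])
qed

lemma MQ_bound:
  assumes r: "rho s < pi"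
  shows "norm (M s *v (Q (cn n) s *v v)) \<le> ((rho s)\<^sup>2 * norm v / (pi\<^sup>2 - (rho s)\<^sup>2)) * inverse ((real (Suc n))\<^sup>2)"
proof -
  have r0: "0 \<le> rho s" by (rule rho_nonneg)
  have c: "cn n > (rho s)\<^sup>2" by (rule cn_gt[OF r0 r])
  have g: "cn n - (rho s)\<^sup>2 \<ge> (real (Suc n))\<^sup>2 * (pi\<^sup>2 - (rho s)\<^sup>2)" by (rule cn_gap[OF r0 r])
  have pg: "pi\<^sup>2 - (rho s)\<^sup>2 > 0" using r r0 by (simp add: power_strict_mono)
  have "norm (M s *v (Q (cn n) s *v v)) \<le> (rho s)\<^sup>2 * norm (Q (cn n) s *v v)" by (rule M_bound)
  also have "\<dots> \<le> (rho s)\<^sup>2 * (norm v / (cn n - (rho s)\<^sup>2))"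
    by (intro mult_left_mono Q_bound[OF c]) simp
  also have "\<dots> \<le> (rho s)\<^sup>2 * (norm v / ((real (Suc n))\<^sup>2 * (pi\<^sup>2 - (rho s)\<^sup>2)))"
  proof (intro mult_left_mono divide_left_mono g)
    show "0 < (cn n - (rho s)\<^sup>2) * ((real (Suc n))\<^sup>2 * (pi\<^sup>2 - (rho s)\<^sup>2))"
      using c pg by (intro mult_pos_pos) simp_all
  qed simp_all
  also have "\<dots> = ((rho s)\<^sup>2 * norm v / (pi\<^sup>2 - (rho s)\<^sup>2)) * inverse ((real (Suc n))\<^sup>2)"
    by (simp add: field_simps)
  finally show ?thesis .
qed

lemma MQ_summable:
  assumes r: "rho s < pi"
  shows "summable (\<lambda>n. M s *v (Q (cn n) s *v v))"
  by (rule summable_comparison_test'[OF summable_mult[OF summable_inv_sq] MQ_bound[OF r]])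

lemma rep_vec:
  assumes r: "rho s < pi"
  shows "Cm s *v (matrix_inv (Sm s) *v v) = v - 2 *\<^sub>R (\<Sum>n. M s *v (Q (cn n) s *v v))"
proof -
  have r0: "0 \<le> rho s" by (rule rho_nonneg)
  have c: "\<And>n. cn n > (rho s)\<^sup>2" by (rule cn_gt[OF r0 r])
  define L where "L v = v - 2 *\<^sub>R (\<Sum>n. M s *v (Q (cn n) s *v v))" for v
  define R where "R v = Cm s *v (matrix_inv (Sm s) *v v)" for v
  have linR: "linear R" unfolding R_def
    by (intro linear_compose[unfolded o_def, OF matrix_vector_mul_linear matrix_vector_mul_linear])
  have linL: "linear L"
  proof (rule linearI)
    fix a b :: "real^'q"
    have "(\<Sum>n. M s *v (Q (cn n) s *v (a + b))) = (\<Sum>n. M s *v (Q (cn n) s *v a)) + (\<Sum>n. M s *v (Q (cn n) s *v b))"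
      using suminf_add[OF MQ_summable[OF r, of a] MQ_summable[OF r, of b]]
      by (simp add: matrix_vector_right_distrib)
    then show "L (a + b) = L a + L b" by (simp add: L_def algebra_simps)
  next
    fix k :: real and a :: "real^'q"
    have "(\<Sum>n. M s *v (Q (cn n) s *v (k *\<^sub>R a))) = k *\<^sub>R (\<Sum>n. M s *v (Q (cn n) s *v a))"
      using suminf_scaleR_right[OF MQ_summable[OF r, of a], of k]
      by (simp add: matrix_vector_mult_scaleR)
    then show "L (k *\<^sub>R a) = k *\<^sub>R L a" by (simp add: L_def algebra_simps)
  qed
  have eq: "L v = R v" if "v \<in> {v. \<exists>l. M s *v v = l *\<^sub>R v}" for v
  proof -
    from that obtain l where e: "M s *v v = l *\<^sub>R v" by auto
    show ?thesis
    proof (cases "v = 0")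
      case True
      have "L 0 = 0" "R 0 = 0" using linear_0[OF linL] linear_0[OF linR] by auto
      then show ?thesis using True by simp
    next
      case False
      note lb = eig_bounds[OF e False]
      have "(rho s)\<^sup>2 < pi\<^sup>2" by (rule power_strict_mono[OF r rho_nonneg]) simp
      then have lp: "l < pi\<^sup>2" using lb(2) by linarith
      have sp: "sincv l > 0" using sincv_pos lb(1) lp by simp
      have MQ: "M s *v (Q (cn n) s *v v) = (l / (cn n - l)) *\<^sub>R v" for n
        using Q_eig[OF e c[of n]] by (simp add: matrix_vector_mult_scaleR e)
      have "(\<lambda>n. M s *v (Q (cn n) s *v v)) sums (((1 - cos (sqrt l) / sincv l) / 2) *\<^sub>R v)"
        unfolding MQ by (rule sums_scaleR_left[OF MLl[OF lb(1) lp]])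
      then have "(\<Sum>n. M s *v (Q (cn n) s *v v)) = ((1 - cos (sqrt l) / sincv l) / 2) *\<^sub>R v"
        by (simp add: sums_iff)
      then have "L v = v - (2 * ((1 - cos (sqrt l) / sincv l) / 2)) *\<^sub>R v"
        by (simp add: L_def)
      also have "\<dots> = (cos (sqrt l) / sincv l) *\<^sub>R v"
      proof -
        have "2 * ((1 - cos (sqrt l) / sincv l) / 2) = 1 - cos (sqrt l) / sincv l" by simp
        then show ?thesis by (simp only: scaleR_diff_left scaleR_one) simp
      qed
      finally have "L v = (cos (sqrt l) / sincv l) *\<^sub>R v" .
      moreover have "matrix_inv (Sm s) *v v = (1 / sincv l) *\<^sub>R v"
      proof -
        have "Sm s *v ((1 / sincv l) *\<^sub>R v) = v"
          using Sm_eig[OF e lb(1)] sp by (simp add: matrix_vector_mult_scaleR)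
        then have "matrix_inv (Sm s) *v v = matrix_inv (Sm s) *v (Sm s *v ((1 / sincv l) *\<^sub>R v))" by simp
        also have "\<dots> = (1 / sincv l) *\<^sub>R v"
          using matrix_inv_props(2)[OF Sm_invertible[OF r]] by (simp add: matrix_vector_mul_assoc)
        finally show ?thesis .
      qed
      then have "R v = (cos (sqrt l) / sincv l) *\<^sub>R v"
        using Cm_eig[OF e lb(1)] by (simp add: R_def matrix_vector_mult_scaleR)
      ultimately show ?thesis by simp
    qed
  qed
  have "L v = R v"
    using linear_eq_on_span[OF linL linR, of "{v. \<exists>l. M s *v v = l *\<^sub>R v}" v] eq eig_span_M by auto
  then show ?thesis by (simp add: L_def R_def)
qed

end

(* ---- Rep3 ---- *)

context skewsys begin

definition gf :: "real^'q \<Rightarrow> nat \<Rightarrow> real^'m \<Rightarrow> real" where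
  "gf x n s = 2 * (x \<bullet> x) - 2 * cn n * (x \<bullet> (Q (cn n) s *v x))"

lemma UcotU_eq:
  assumes r: "rho s < pi"
  shows "UcotU (Umat Us s) = cemb (Cm s ** matrix_inv (Sm s))"
proof -
  have c: "(\<Sum>k. ((-1)^k / fact (2*k)) *\<^sub>R cmatpow (Umat Us s) (2*k)) = cemb (Cm s)"
  proof -
    have "(\<lambda>k. cemb (((-1)^k / fact (2*k)) *\<^sub>R rpow (M s) k)) sums cemb (Cm s)"
      unfolding Cm_def by (rule bounded_linear.sums[OF bl_cemb summable_sums[OF Cm_summable]])
    then show ?thesis by (simp add: cmatpow_even cemb_scaleR sums_iff)
  qed
  have sn: "(\<Sum>k. ((-1)^k / fact (2*k+1)) *\<^sub>R cmatpow (Umat Us s) (2*k)) = cemb (Sm s)"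
  proof -
    have "(\<lambda>k. cemb (((-1)^k / fact (2*k+1)) *\<^sub>R rpow (M s) k)) sums cemb (Sm s)"
      unfolding Sm_def by (rule bounded_linear.sums[OF bl_cemb summable_sums[OF Sm_summable]])
    then show ?thesis by (simp add: cmatpow_even cemb_scaleR sums_iff)
  qed
  show ?thesis
    unfolding UcotU_def c sn cemb_matrix_inv[OF Sm_invertible[OF r]] cemb_mult ..
qed

lemma MQ_dot:
  assumes c: "c > (rho s)\<^sup>2"
  shows "(M s *v (Q c s *v x)) \<bullet> x = c * (x \<bullet> (Q c s *v x)) - x \<bullet> x"
proof -
  have "c *\<^sub>R (Q c s *v x) - M s *v (Q c s *v x) = x" using Q_left[OF c, of x] by (simp add: K_mv)
  then have "M s *v (Q c s *v x) = c *\<^sub>R (Q c s *v x) - x" by (simp add: algebra_simps)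
  then have "(M s *v (Q c s *v x)) \<bullet> x = c * ((Q c s *v x) \<bullet> x) - x \<bullet> x"
    by (simp add: inner_diff_left)
  then show ?thesis by (simp add: inner_commute)
qed

lemma gf_summable:
  assumes r: "rho s < pi"
  shows "summable (\<lambda>n. gf x n s)"
proof -
  have r0: "0 \<le> rho s" by (rule rho_nonneg)
  have "summable (\<lambda>n. (M s *v (Q (cn n) s *v x)) \<bullet> x)"
    by (rule bounded_linear.summable[OF bounded_linear_inner_left MQ_summable[OF r]])
  then have "summable (\<lambda>n. -2 * ((M s *v (Q (cn n) s *v x)) \<bullet> x))" by (rule summable_mult)
  moreover have "-2 * ((M s *v (Q (cn n) s *v x)) \<bullet> x) = gf x n s" for n
    unfolding gf_def MQ_dot[OF cn_gt[OF r0 r]] by (simp add: algebra_simps)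
  ultimately show ?thesis by simp
qed

lemma phi_eq:
  assumes r: "rho s < pi"
  shows "phi Us x t s = x \<bullet> x + (\<Sum>n. gf x n s) + 4 * (t \<bullet> s)"
proof -
  have r0: "0 \<le> rho s" by (rule rho_nonneg)
  define N where "N = Cm s ** matrix_inv (Sm s)"
  have vx: "(\<chi> k. complex_of_real (x$k)) = vemb x" by (simp add: vemb_def)
  have "Re (\<Sum>i\<in>UNIV. (UcotU (Umat Us s) *v (\<chi> k. complex_of_real (x$k))) $ i * cnj (complex_of_real (x$i)))
      = (N *v x) \<bullet> x"
    unfolding UcotU_eq[OF r] vx cemb_mv N_def[symmetric]
    by (simp add: vemb_def inner_vec_def)
  also have "N *v x = x - 2 *\<^sub>R (\<Sum>n. M s *v (Q (cn n) s *v x))"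
    unfolding N_def matrix_vector_mul_assoc[symmetric] by (rule rep_vec[OF r])
  also have "(x - 2 *\<^sub>R (\<Sum>n. M s *v (Q (cn n) s *v x))) \<bullet> x
      = x \<bullet> x - 2 * (\<Sum>n. (M s *v (Q (cn n) s *v x)) \<bullet> x)"
    using bounded_linear.suminf[OF bounded_linear_inner_left MQ_summable[OF r], of x]
    by (simp add: inner_diff_left)
  also have "x \<bullet> x - 2 * (\<Sum>n. (M s *v (Q (cn n) s *v x)) \<bullet> x) = x \<bullet> x + (\<Sum>n. -2 * ((M s *v (Q (cn n) s *v x)) \<bullet> x))"
    using suminf_mult[OF bounded_linear.summable[OF bounded_linear_inner_left MQ_summable[OF r]], of "-2"]
    by simp
  also have "(\<Sum>n. -2 * ((M s *v (Q (cn n) s *v x)) \<bullet> x)) = (\<Sum>n. gf x n s)"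
    unfolding gf_def MQ_dot[OF cn_gt[OF r0 r]] by (simp add: algebra_simps)
  finally show ?thesis unfolding phi_def by simp
qed

end

(* ---- Der1 ---- *)

context skewsys begin

definition P :: "real^'m \<Rightarrow> real^'m \<Rightarrow> real^'q \<Rightarrow> real^'q" where
  "P s h v = - (A s *v (A h *v v)) - A h *v (A s *v v)"

lemma M_add: "M (s + h) *v v = M s *v v + P s h v + M h *v v"
  by (simp add: Mv P_def A_add matrix_vector_mult_add_rdistrib matrix_vector_right_distrib algebra_simps)

lemma P_sym: "(P s h a) \<bullet> b = a \<bullet> (P s h b)"
proof -
  have 1: "(A s *v (A h *v a)) \<bullet> b = a \<bullet> (A h *v (A s *v b))"
    using A_skew[of s "A h *v a" b] A_skew[of h a "A s *v b"] by simp
  have 2: "(A h *v (A s *v a)) \<bullet> b = a \<bullet> (A s *v (A h *v b))"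
    using A_skew[of h "A s *v a" b] A_skew[of s a "A h *v b"] by simp
  show ?thesis unfolding P_def by (simp add: inner_diff_left inner_diff_right 1 2)
qed

lemma P_dot_self: "y \<bullet> (P h w y) = 2 * ((A h *v y) \<bullet> (A w *v y))"
proof -
  have 1: "y \<bullet> (A h *v (A w *v y)) = - ((A h *v y) \<bullet> (A w *v y))"
    using A_skew[of h y "A w *v y"] by (simp add: inner_commute)
  have 2: "y \<bullet> (A w *v (A h *v y)) = - ((A h *v y) \<bullet> (A w *v y))"
    using A_skew[of w y "A h *v y"] by (simp add: inner_commute)
  show ?thesis unfolding P_def by (simp add: inner_diff_right 1 2)
qed

lemma P_add2: "P s (h1 + h2) v = P s h1 v + P s h2 v"
  by (simp add: P_def A_add matrix_vector_mult_add_rdistrib matrix_vector_right_distrib algebra_simps)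
lemma P_scale2: "P s (k *\<^sub>R h) v = k *\<^sub>R P s h v"
  by (simp add: P_def A_scale scaleR_matrix_vector_assoc[symmetric] matrix_vector_mult_scaleR algebra_simps)
lemma P_add3: "P s h (a + b) = P s h a + P s h b"
  by (simp add: P_def matrix_vector_right_distrib algebra_simps)
lemma P_scale3: "P s h (k *\<^sub>R a) = k *\<^sub>R P s h a"
  by (simp add: P_def matrix_vector_mult_scaleR algebra_simps)
lemma P_diff3: "P s h (a - b) = P s h a - P s h b"
  by (simp add: P_def matrix_vector_mult_diff_distrib algebra_simps)

lemma P_bound: "norm (P s h v) \<le> 2 * rho s * KA * norm h * norm v"
proof -
  have a: "norm (A s *v (A h *v v)) \<le> rho s * (KA * norm h * norm v)"
    by (rule order_trans[OF A_bound mult_left_mono[OF A_lin_bound rho_nonneg]])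
  have b: "norm (A h *v (A s *v v)) \<le> KA * norm h * (rho s * norm v)"
    by (rule order_trans[OF A_lin_bound mult_left_mono[OF A_bound]])
       (simp add: KA_nonneg)
  have "norm (P s h v) \<le> norm (A s *v (A h *v v)) + norm (A h *v (A s *v v))"
    unfolding P_def by (metis norm_diff_ineq norm_minus_cancel norm_triangle_ineq4 diff_conv_add_uminus)
  then show ?thesis using a b by (simp add: algebra_simps)
qed

lemma Mh_bound: "norm (M h *v v) \<le> KA\<^sup>2 * (norm h)\<^sup>2 * norm v"
proof -
  have "norm (M h *v v) = norm (A h *v (A h *v v))" by (simp add: Mv)
  also have "\<dots> \<le> KA * norm h * (KA * norm h * norm v)"
    by (rule order_trans[OF A_lin_bound mult_left_mono[OF A_lin_bound]]) (simp add: KA_nonneg)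
  finally show ?thesis by (simp add: power2_eq_square algebra_simps)
qed

lemma rho_sq_add:
  assumes "norm h \<le> 1"
  shows "(rho (s + h))\<^sup>2 \<le> (rho s)\<^sup>2 + (2 * rho s * KA + KA\<^sup>2) * norm h"
proof -
  have "rho (s + h) \<le> rho s + KA * norm h" by (rule rho_add)
  then have "(rho (s + h))\<^sup>2 \<le> (rho s + KA * norm h)\<^sup>2"
    by (rule power_mono) (rule rho_nonneg)
  also have "\<dots> = (rho s)\<^sup>2 + 2 * rho s * KA * norm h + KA\<^sup>2 * (norm h)\<^sup>2"
    by (simp add: power2_eq_square algebra_simps)
  also have "KA\<^sup>2 * (norm h)\<^sup>2 \<le> KA\<^sup>2 * norm h"
    using assms by (intro mult_left_mono) (auto simp: power2_eq_square mult_left_le_one_le)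
  finally show ?thesis by (simp add: algebra_simps)
qed

lemma Q_shift:
  assumes c: "c > (rho s)\<^sup>2" and c': "c > (rho (s + h))\<^sup>2"
  shows "Q c (s + h) *v x - Q c s *v x
       = Q c s *v (P s h (Q c (s + h) *v x) + M h *v (Q c (s + h) *v x))"
proof -
  define y' where "y' = Q c (s + h) *v x"
  have e1: "c *\<^sub>R y' - M (s + h) *v y' = x" using Q_left[OF c', of x] unfolding K_mv y'_def .
  have "(c *\<^sub>R mat 1 - M s) *v y' = c *\<^sub>R y' - M s *v y'" by (rule K_mv)
  also have "\<dots> = x + (P s h y' + M h *v y')"
    using e1 unfolding M_add by (simp add: algebra_simps)
  finally have "(c *\<^sub>R mat 1 - M s) *v y' = x + (P s h y' + M h *v y')" .
  then have "Q c s *v (x + (P s h y' + M h *v y')) = y'" by (rule Q_eq[OF c])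
  then show ?thesis unfolding y'_def[symmetric] by (simp add: matrix_vector_right_distrib algebra_simps)
qed

lemma linear_QP: "linear (\<lambda>h. Q c s *v P s h v)"
  by (intro linearI) (simp_all add: P_add2 P_scale2 matrix_vector_right_distrib matrix_vector_mult_scaleR)

lemma y_deriv:
  assumes c: "c > (rho s)\<^sup>2"
  shows "((\<lambda>s. Q c s *v x) has_derivative (\<lambda>h. Q c s *v P s h (Q c s *v x))) (at s)"
  unfolding has_derivative_at_alt
proof (intro conjI allI impI)
  show "bounded_linear (\<lambda>h. Q c s *v P s h (Q c s *v x))"
    using linear_QP by (simp add: linear_conv_bounded_linear)
  fix e :: real assume e: "e > 0"
  define g where "g = c - (rho s)\<^sup>2"
  have g: "g > 0" using c by (simp add: g_def)
  define K1 where "K1 = 2 * rho s * KA + KA\<^sup>2"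
  have K1: "K1 \<ge> 0" using rho_nonneg KA_nonneg by (simp add: K1_def)
  define d0 where "d0 = min 1 (g / (2 * (K1 + 1)))"
  have d0: "d0 > 0" "d0 \<le> 1" using g K1 by (auto simp: d0_def)
  define Y where "Y = 2 * norm x / g"
  define C1 where "C1 = (2 * rho s * KA * Y + KA\<^sup>2 * Y) / g"
  define C2 where "C2 = (2 * rho s * KA * C1 + KA\<^sup>2 * Y) / g"
  have Y0: "Y \<ge> 0" using g by (simp add: Y_def)
  have C1: "C1 \<ge> 0" using g Y0 rho_nonneg KA_nonneg by (simp add: C1_def)
  have C2: "C2 \<ge> 0" using g Y0 C1 rho_nonneg KA_nonneg by (simp add: C2_def)
  define d where "d = min d0 (e / (C2 + 1))"
  have d: "d > 0" using d0 e C2 by (simp add: d_def)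
  show "\<exists>d>0. \<forall>y. norm (y - s) < d \<longrightarrow>
      norm (Q c y *v x - Q c s *v x - Q c s *v P s (y - s) (Q c s *v x)) \<le> e * norm (y - s)"
  proof (intro exI[of _ d] conjI allI impI d)
    fix y assume yd: "norm (y - s) < d"
    define h where "h = y - s"
    have yh: "y = s + h" by (simp add: h_def)
    have h1: "norm h \<le> 1" and hd0: "norm h \<le> d0" and he: "norm h \<le> e / (C2 + 1)"
      using yd d0 by (auto simp: h_def d_def)
    have "(rho (s + h))\<^sup>2 \<le> (rho s)\<^sup>2 + K1 * norm h" unfolding K1_def by (rule rho_sq_add[OF h1])
    also have "K1 * norm h \<le> K1 * (g / (2 * (K1 + 1)))"
      using hd0 K1 by (intro mult_left_mono) (auto simp: d0_def)
    also have "K1 * (g / (2 * (K1 + 1))) \<le> g / 2"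
      using K1 g by (simp add: field_simps)
    finally have rh: "(rho (s + h))\<^sup>2 \<le> (rho s)\<^sup>2 + g / 2" by simp
    have lt: "(rho s)\<^sup>2 + g / 2 < c" using g by (simp add: g_def field_simps)
    have c': "c > (rho (s + h))\<^sup>2" by (rule le_less_trans[OF rh lt])
    have gh: "c - (rho (s + h))\<^sup>2 \<ge> g / 2"
    proof -
      have "(rho s)\<^sup>2 + g / 2 = c - g / 2" by (simp add: g_def field_simps)
      then show ?thesis using rh by simp
    qed
    define y1 where "y1 = Q c (s + h) *v x"
    define y0 where "y0 = Q c s *v x"
    have ny1: "norm y1 \<le> Y"
    proof -
      have "norm y1 \<le> norm x / (c - (rho (s + h))\<^sup>2)" unfolding y1_def by (rule Q_bound[OF c'])
      also have "\<dots> \<le> norm x / (g / 2)" using gh g by (intro divide_left_mono) auto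
      finally show ?thesis by (simp add: Y_def mult.commute)
    qed
    have Qb: "norm (Q c s *v v) \<le> norm v / g" for v using Q_bound[OF c] by (simp add: g_def)
    have D: "y1 - y0 = Q c s *v (P s h y1 + M h *v y1)"
      unfolding y1_def y0_def by (rule Q_shift[OF c c'])
    have nD: "norm (y1 - y0) \<le> C1 * norm h"
    proof -
      have "norm (P s h y1 + M h *v y1) \<le> 2 * rho s * KA * norm h * norm y1 + KA\<^sup>2 * (norm h)\<^sup>2 * norm y1"
        by (rule order_trans[OF norm_triangle_ineq add_mono[OF P_bound Mh_bound]])
      also have "\<dots> \<le> 2 * rho s * KA * norm h * Y + KA\<^sup>2 * norm h * Y"
      proof (rule add_mono)
        show "2 * rho s * KA * norm h * norm y1 \<le> 2 * rho s * KA * norm h * Y"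
          using ny1 rho_nonneg KA_nonneg by (intro mult_left_mono) auto
        have "(norm h)\<^sup>2 \<le> norm h" using h1 by (simp add: power2_eq_square mult_left_le_one_le)
        then have "KA\<^sup>2 * (norm h)\<^sup>2 \<le> KA\<^sup>2 * norm h" by (intro mult_left_mono) auto
        then show "KA\<^sup>2 * (norm h)\<^sup>2 * norm y1 \<le> KA\<^sup>2 * norm h * Y"
          by (rule mult_mono[OF _ ny1]) auto
      qed
      finally have "norm (P s h y1 + M h *v y1) \<le> (2 * rho s * KA * Y + KA\<^sup>2 * Y) * norm h"
        by (simp add: algebra_simps)
      then show ?thesis unfolding D using Qb[of "P s h y1 + M h *v y1"] g
        by (simp add: C1_def divide_right_mono mult.commute order_trans[OF _ divide_right_mono] field_simps)
    qed
    have E: "y1 - y0 - Q c s *v P s h y0 = Q c s *v (P s h (y1 - y0) + M h *v y1)"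
    proof -
      have "y1 - y0 - Q c s *v P s h y0 = Q c s *v (P s h y1 + M h *v y1) - Q c s *v P s h y0"
        using D by simp
      also have "\<dots> = Q c s *v (P s h (y1 - y0) + M h *v y1)"
        by (simp add: P_diff3 matrix_vector_right_distrib matrix_vector_mult_diff_distrib)
      finally show ?thesis .
    qed
    have nE: "norm (y1 - y0 - Q c s *v P s h y0) \<le> C2 * (norm h)\<^sup>2"
    proof -
      have "norm (P s h (y1 - y0) + M h *v y1) \<le> 2 * rho s * KA * norm h * norm (y1 - y0) + KA\<^sup>2 * (norm h)\<^sup>2 * norm y1"
        by (rule order_trans[OF norm_triangle_ineq add_mono[OF P_bound Mh_bound]])
      also have "\<dots> \<le> 2 * rho s * KA * norm h * (C1 * norm h) + KA\<^sup>2 * (norm h)\<^sup>2 * Y"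
        using nD ny1 rho_nonneg KA_nonneg by (intro add_mono mult_left_mono) auto
      finally have "norm (P s h (y1 - y0) + M h *v y1) \<le> (2 * rho s * KA * C1 + KA\<^sup>2 * Y) * (norm h)\<^sup>2"
        by (simp add: power2_eq_square algebra_simps)
      then show ?thesis unfolding E using Qb[of "P s h (y1 - y0) + M h *v y1"] g
        by (simp add: C2_def field_simps)
    qed
    have "C2 * (norm h)\<^sup>2 \<le> e * norm h"
    proof -
      have "C2 * norm h \<le> C2 * (e / (C2 + 1))" using he C2 by (intro mult_left_mono) auto
      also have "\<dots> \<le> e" using C2 e by (simp add: field_simps)
      finally have "C2 * norm h \<le> e" .
      then have "(C2 * norm h) * norm h \<le> e * norm h" by (intro mult_right_mono) auto
      then show ?thesis by (simp add: power2_eq_square mult.assoc)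
    qed
    with nE show "norm (Q c y *v x - Q c s *v x - Q c s *v P s (y - s) (Q c s *v x)) \<le> e * norm (y - s)"
      by (simp add: yh y1_def y0_def h_def[symmetric])
  qed
qed

end

(* ---- Der2 ---- *)

lemma bb_mv: "bounded_bilinear (\<lambda>(X::real^'n^'m) (v::real^'n). X *v v)"
proof -
  have "bilinear (\<lambda>(X::real^'n^'m) (v::real^'n). X *v v)"
    unfolding bilinear_def
    by (auto intro!: linearI simp: matrix_vector_mult_add_rdistrib scaleR_matrix_vector_assoc
        matrix_vector_right_distrib matrix_vector_mult_scaleR)
  then show ?thesis by (simp add: bilinear_conv_bounded_bilinear)
qed

lemmas mv_deriv = bounded_bilinear.FDERIV[OF bb_mv]

context skewsys begin

lemma A_deriv: "((\<lambda>s. A s) has_derivative A) (at s)"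
proof -
  have "linear A" by (intro linearI) (simp_all add: A_add A_scale)
  then have "bounded_linear A" by (simp add: linear_conv_bounded_linear)
  then show ?thesis by (rule bounded_linear_imp_has_derivative)
qed

lemma P_deriv:
  assumes f: "(f has_derivative f') (at s)"
  shows "((\<lambda>s. P s w (f s)) has_derivative (\<lambda>h. P h w (f s) + P s w (f' h))) (at s)"
proof -
  have Aw: "((\<lambda>s. A w) has_derivative (\<lambda>h. 0)) (at s)" by simp
  have t1: "((\<lambda>s. A s *v (A w *v f s)) has_derivative
      (\<lambda>h. A s *v (A w *v f' h + 0 *v f s) + A h *v (A w *v f s))) (at s)"
    by (rule mv_deriv[OF A_deriv mv_deriv[OF Aw f]])
  have t2: "((\<lambda>s. A w *v (A s *v f s)) has_derivative
      (\<lambda>h. A w *v (A s *v f' h + A h *v f s) + 0 *v (A s *v f s))) (at s)"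
    by (rule mv_deriv[OF Aw mv_deriv[OF A_deriv f]])
  have "((\<lambda>s. - (A s *v (A w *v f s)) - A w *v (A s *v f s)) has_derivative
      (\<lambda>h. - (A s *v (A w *v f' h + 0 *v f s) + A h *v (A w *v f s))
           - (A w *v (A s *v f' h + A h *v f s) + 0 *v (A s *v f s)))) (at s)"
    by (intro has_derivative_diff has_derivative_minus t1 t2)
  moreover have "(\<lambda>s. P s w (f s)) = (\<lambda>s. - (A s *v (A w *v f s)) - A w *v (A s *v f s))"
    by (simp add: P_def fun_eq_iff)
  ultimately show ?thesis
    by (auto elim!: has_derivative_eq_rhs
        simp: fun_eq_iff P_def matrix_vector_right_distrib algebra_simps)
qed

definition yv :: "real^'q \<Rightarrow> nat \<Rightarrow> real^'m \<Rightarrow> real^'q" where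
  "yv x n s = Q (cn n) s *v x"

definition g1 :: "real^'q \<Rightarrow> nat \<Rightarrow> real^'m \<Rightarrow> real^'m \<Rightarrow> real" where
  "g1 x n s w = -2 * cn n * (yv x n s \<bullet> P s w (yv x n s))"

definition Bf :: "real^'q \<Rightarrow> nat \<Rightarrow> real^'m \<Rightarrow> real^'m \<Rightarrow> real^'m \<Rightarrow> real" where
  "Bf x n s h w = -2 * cn n *
     ((Q (cn n) s *v P s h (yv x n s)) \<bullet> P s w (yv x n s)
      + yv x n s \<bullet> P h w (yv x n s)
      + yv x n s \<bullet> P s w (Q (cn n) s *v P s h (yv x n s)))"

lemma yv_deriv:
  assumes c: "cn n > (rho s)\<^sup>2"
  shows "(yv x n has_derivative (\<lambda>h. Q (cn n) s *v P s h (yv x n s))) (at s)"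
  unfolding yv_def[abs_def] using y_deriv[OF c] by simp

lemma gf_deriv:
  assumes c: "cn n > (rho s)\<^sup>2"
  shows "((\<lambda>s. gf x n s) has_derivative (\<lambda>h. g1 x n s h)) (at s)"
proof -
  have "((\<lambda>s. 2 * (x \<bullet> x) - 2 * cn n * (x \<bullet> yv x n s)) has_derivative
        (\<lambda>h. 0 - 2 * cn n * (x \<bullet> (Q (cn n) s *v P s h (yv x n s))))) (at s)"
    by (intro has_derivative_diff has_derivative_const has_derivative_mult_right
        has_derivative_inner_right yv_deriv[OF c])
  moreover have "(\<lambda>s. 2 * (x \<bullet> x) - 2 * cn n * (x \<bullet> yv x n s)) = (\<lambda>s. gf x n s)"
    by (simp add: gf_def yv_def)
  moreover have "(\<lambda>h. 0 - 2 * cn n * (x \<bullet> (Q (cn n) s *v P s h (yv x n s)))) = (\<lambda>h. g1 x n s h)"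
  proof
    fix h
    have "x \<bullet> (Q (cn n) s *v P s h (yv x n s)) = (Q (cn n) s *v x) \<bullet> P s h (yv x n s)"
      using Q_sym[OF c] by simp
    then show "0 - 2 * cn n * (x \<bullet> (Q (cn n) s *v P s h (yv x n s))) = g1 x n s h"
      by (simp add: g1_def yv_def)
  qed
  ultimately show ?thesis by simp
qed

lemma g1_deriv:
  assumes c: "cn n > (rho s)\<^sup>2"
  shows "((\<lambda>s. g1 x n s w) has_derivative (\<lambda>h. Bf x n s h w)) (at s)"
proof -
  have "((\<lambda>s. -2 * cn n * (yv x n s \<bullet> P s w (yv x n s))) has_derivative
        (\<lambda>h. -2 * cn n * (yv x n s \<bullet> (P h w (yv x n s) + P s w (Q (cn n) s *v P s h (yv x n s)))
            + (Q (cn n) s *v P s h (yv x n s)) \<bullet> P s w (yv x n s)))) (at s)"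
    by (intro has_derivative_mult_right has_derivative_inner yv_deriv[OF c] P_deriv)
  then show ?thesis
    unfolding g1_def[abs_def]
    by (rule has_derivative_eq_rhs) (simp add: fun_eq_iff Bf_def inner_add_right algebra_simps)
qed

end

(* ---- Ser ---- *)

lemma series_has_derivative:
  fixes f :: "nat \<Rightarrow> 'a::real_normed_vector \<Rightarrow> real" and f' :: "nat \<Rightarrow> 'a \<Rightarrow> 'a \<Rightarrow> real"
  assumes S: "open S" "convex S" "x0 \<in> S"
    and d: "\<And>n x. x \<in> S \<Longrightarrow> (f n has_derivative f' n x) (at x)"
    and b: "\<And>n x h. x \<in> S \<Longrightarrow> \<bar>f' n x h\<bar> \<le> D n * norm h"
    and D: "summable D" "\<And>n. D n \<ge> 0"
    and sm: "\<And>x. x \<in> S \<Longrightarrow> summable (\<lambda>n. f n x)"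
    and x: "x \<in> S"
  shows "((\<lambda>x. \<Sum>n. f n x) has_derivative (\<lambda>h. \<Sum>n. f' n x h)) (at x)"
proof -
  have sm': "summable (\<lambda>n. f' n y h)" if "y \<in> S" for y h
    by (rule summable_comparison_test'[OF summable_mult2[OF D(1), of "norm h"]])
       (use b[OF that] in \<open>auto simp: mult.commute\<close>)
  have unif: "\<forall>\<^sub>F n in sequentially. \<forall>y\<in>S. \<forall>h. norm ((\<Sum>i<n. f' i y h) - (\<Sum>i. f' i y h)) \<le> e * norm h"
    if e: "e > 0" for e
  proof -
    obtain N where N: "\<And>n. n \<ge> N \<Longrightarrow> norm (\<Sum>i. D (i + n)) < e"
      using suminf_exist_split[OF e D(1)] by blast
    show ?thesis unfolding eventually_sequentially
    proof (intro exI[of _ N] allI impI ballI)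
      fix n y h assume n: "n \<ge> N" and y: "y \<in> S"
      have "(\<Sum>i. f' i y h) = (\<Sum>i<n. f' i y h) + (\<Sum>i. f' (i + n) y h)"
        using suminf_split_initial_segment[OF sm'[OF y, of h], of n] by (simp add: algebra_simps)
      then have "norm ((\<Sum>i<n. f' i y h) - (\<Sum>i. f' i y h)) = \<bar>\<Sum>i. f' (i + n) y h\<bar>" by simp
      also have "\<dots> \<le> (\<Sum>i. D (i + n) * norm h)"
      proof -
        have s1: "summable (\<lambda>i. D (i + n) * norm h)"
          using summable_ignore_initial_segment[OF D(1), of n] by (intro summable_mult2)
        have "\<bar>\<Sum>i. f' (i + n) y h\<bar> \<le> (\<Sum>i. \<bar>f' (i + n) y h\<bar>)"
          by (rule summable_rabs[OF summable_comparison_test'[OF s1]]) (use b[OF y] in auto)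
        also have "\<dots> \<le> (\<Sum>i. D (i + n) * norm h)"
          by (rule suminf_le[OF _ summable_comparison_test'[OF s1] s1]) (use b[OF y] in auto)
        finally show ?thesis .
      qed
      also have "\<dots> = (\<Sum>i. D (i + n)) * norm h"
        by (rule suminf_mult2[symmetric, OF summable_ignore_initial_segment[OF D(1)]])
      also have "\<dots> \<le> e * norm h"
        using N[OF n] D(2) by (intro mult_right_mono) (auto intro: suminf_nonneg summable_ignore_initial_segment[OF D(1)])
      finally show "norm ((\<Sum>i<n. f' i y h) - (\<Sum>i. f' i y h)) \<le> e * norm h" .
    qed
  qed
  have dS: "\<And>n y. y \<in> S \<Longrightarrow> (f n has_derivative f' n y) (at y within S)"
    using d has_derivative_at_withinI by blast
  have "\<exists>g. \<forall>y\<in>S. (\<lambda>n. f n y) sums g y \<and> (g has_derivative (\<lambda>h. \<Sum>n. f' n y h)) (at y within S)"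
    by (rule has_derivative_series[where g'="\<lambda>y h. \<Sum>n. f' n y h", OF S(2) dS unif S(3) summable_sums[OF sm[OF S(3)]]])
  then obtain g where g: "\<And>y. y \<in> S \<Longrightarrow> (\<lambda>n. f n y) sums g y \<and> (g has_derivative (\<lambda>h. \<Sum>n. f' n y h)) (at y within S)"
    by blast
  have "(g has_derivative (\<lambda>h. \<Sum>n. f' n x h)) (at x)"
    using g[OF x] at_within_open[OF x S(1)] by simp
  moreover have "\<And>y. y \<in> S \<Longrightarrow> g y = (\<Sum>n. f n y)" using g by (simp add: sums_iff)
  ultimately show ?thesis
    by (rule has_derivative_transform_within_open[OF _ S(1) x]) 
qed


(* ---- Der3 ---- *)

lemma frac_aux: "a > 0 \<Longrightarrow> X \<noteq> 0 \<Longrightarrow> c = a * p \<Longrightarrow> c / (a * X)\<^sup>2 = p / X\<^sup>2 * inverse (a::real)"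
  by (simp add: power_mult_distrib field_simps power2_eq_square)

lemma cw_bound:
  assumes r: "0 \<le> r" "r < pi"
  shows "cn n / (cn n - r\<^sup>2)\<^sup>2 \<le> pi\<^sup>2 / (pi\<^sup>2 - r\<^sup>2)\<^sup>2 * inverse ((real (Suc n))\<^sup>2)"
proof -
  define a where "a = (real (Suc n))\<^sup>2"
  have a: "a \<ge> 1" by (simp add: a_def)
  have pr: "pi\<^sup>2 - r\<^sup>2 > 0" using r by (simp add: power_strict_mono)
  have c: "cn n = a * pi\<^sup>2" by (simp add: cn_def a_def power_mult_distrib)
  have g: "cn n - r\<^sup>2 \<ge> a * (pi\<^sup>2 - r\<^sup>2)" using cn_gap[OF r, of n] by (simp add: a_def)
  have ap: "a * (pi\<^sup>2 - r\<^sup>2) > 0" using a pr by simp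
  have cp: "cn n - r\<^sup>2 > 0" using g ap by linarith
  have c0: "0 \<le> cn n" using c a by simp
  have f1: "(a * (pi\<^sup>2 - r\<^sup>2))\<^sup>2 \<le> (cn n - r\<^sup>2)\<^sup>2" using g ap by (intro power_mono) auto
  have f2: "0 < (cn n - r\<^sup>2)\<^sup>2 * (a * (pi\<^sup>2 - r\<^sup>2))\<^sup>2"
    by (intro mult_pos_pos zero_less_power cp ap)
  have "cn n / (cn n - r\<^sup>2)\<^sup>2 \<le> cn n / (a * (pi\<^sup>2 - r\<^sup>2))\<^sup>2"
    by (rule divide_left_mono[OF f1 c0 f2])
  also have "\<dots> = pi\<^sup>2 / (pi\<^sup>2 - r\<^sup>2)\<^sup>2 * inverse a"
    by (rule frac_aux) (use a pr c in auto)
  finally show ?thesis by (simp add: a_def)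
qed

context skewsys begin

lemma good_ball:
  assumes "rho s0 < pi"
  obtains r d where "rho s0 < r" "r < pi" "d > 0" "\<And>s. s \<in> ball s0 d \<Longrightarrow> rho s < r"
proof -
  define r where "r = (rho s0 + pi) / 2"
  define d where "d = (pi - rho s0) / (2 * (KA + 1))"
  have d: "d > 0" using assms KA_nonneg by (simp add: d_def)
  have "rho s < r" if "s \<in> ball s0 d" for s
  proof -
    have "rho s = rho (s0 + (s - s0))" by simp
    also have "\<dots> \<le> rho s0 + KA * norm (s - s0)" by (rule rho_add)
    also have "KA * norm (s - s0) \<le> KA * d"
      using that KA_nonneg by (intro mult_left_mono) (auto simp: dist_norm norm_minus_commute)
    also have "KA * d < (pi - rho s0) / 2"
      using assms KA_nonneg by (simp add: d_def field_simps)
    finally show ?thesis by (simp add: r_def field_simps)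
  qed
  then show ?thesis using that[of r d] assms d by (simp add: r_def)
qed

lemma yv_bound:
  assumes "rho s < r" "r < pi"
  shows "norm (yv x n s) \<le> norm x / (cn n - r\<^sup>2)"
proof -
  have r0: "0 \<le> rho s" by (rule rho_nonneg)
  have c: "cn n > (rho s)\<^sup>2" by (rule cn_gt[OF r0]) (use assms in auto)
  have cr: "cn n > r\<^sup>2" by (rule cn_gt) (use assms r0 in auto)
  have "(rho s)\<^sup>2 \<le> r\<^sup>2" using assms r0 by (intro power_mono) auto
  then have "norm x / (cn n - (rho s)\<^sup>2) \<le> norm x / (cn n - r\<^sup>2)"
    using cr by (intro divide_left_mono) auto
  then show ?thesis using Q_bound[OF c, of x] by (simp add: yv_def)
qed

definition W :: "real \<Rightarrow> real" where "W r = pi\<^sup>2 / (pi\<^sup>2 - r\<^sup>2)\<^sup>2"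

lemma W_nonneg: "W r \<ge> 0" by (simp add: W_def)

lemma ysq_bound:
  assumes "rho s < r" "r < pi"
  shows "cn n * (norm (yv x n s))\<^sup>2 \<le> (norm x)\<^sup>2 * W r * inverse ((real (Suc n))\<^sup>2)"
proof -
  have r0: "0 \<le> r" using rho_nonneg[of s] assms by simp
  have cr: "cn n > r\<^sup>2" by (rule cn_gt) (use assms r0 in auto)
  have "(norm (yv x n s))\<^sup>2 \<le> (norm x / (cn n - r\<^sup>2))\<^sup>2"
    by (rule power_mono[OF yv_bound[OF assms]]) simp
  then have "cn n * (norm (yv x n s))\<^sup>2 \<le> cn n * (norm x / (cn n - r\<^sup>2))\<^sup>2"
    by (rule mult_left_mono) (simp_all add: cn_def)
  also have "\<dots> = (norm x)\<^sup>2 * (cn n / (cn n - r\<^sup>2)\<^sup>2)" by (simp add: power_divide)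
  also have "\<dots> \<le> (norm x)\<^sup>2 * (W r * inverse ((real (Suc n))\<^sup>2))"
    unfolding W_def by (intro mult_left_mono cw_bound[OF r0 assms(2)]) simp
  finally show ?thesis by (simp add: mult.assoc)
qed

lemma g1_bound:
  assumes "rho s < r" "r < pi"
  shows "\<bar>g1 x n s h\<bar> \<le> (4 * r * KA * (norm x)\<^sup>2 * W r * inverse ((real (Suc n))\<^sup>2)) * norm h"
proof -
  define y where "y = yv x n s"
  have r0: "0 \<le> r" using rho_nonneg[of s] assms by simp
  have c0: "cn n \<ge> 0" by (simp add: cn_def)
  have "\<bar>g1 x n s h\<bar> = 2 * cn n * \<bar>y \<bullet> P s h y\<bar>" by (simp add: g1_def y_def abs_mult cn_def)
  also have "\<dots> \<le> 2 * cn n * (norm y * norm (P s h y))"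
    using c0 by (intro mult_left_mono Cauchy_Schwarz_ineq2) auto
  also have "\<dots> \<le> 2 * cn n * (norm y * (2 * r * KA * norm h * norm y))"
  proof -
    have "norm (P s h y) \<le> 2 * rho s * KA * norm h * norm y" by (rule P_bound)
    also have "\<dots> \<le> 2 * r * KA * norm h * norm y"
      using assms KA_nonneg by (intro mult_right_mono) auto
    finally show ?thesis using c0 by (intro mult_left_mono) auto
  qed
  also have "\<dots> = (4 * r * KA * norm h) * (cn n * (norm y)\<^sup>2)" by (simp add: power2_eq_square algebra_simps)
  also have "\<dots> \<le> (4 * r * KA * norm h) * ((norm x)\<^sup>2 * W r * inverse ((real (Suc n))\<^sup>2))"
    using r0 KA_nonneg unfolding y_def by (intro mult_left_mono ysq_bound[OF assms]) auto
  finally show ?thesis by (simp add: algebra_simps)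
qed

lemma Bf_bound:
  assumes "rho s < r" "r < pi"
  shows "\<bar>Bf x n s h w\<bar> \<le> (2 * KA\<^sup>2 * (8 * r\<^sup>2 / (pi\<^sup>2 - r\<^sup>2) + 2) * (norm x)\<^sup>2 * W r
            * inverse ((real (Suc n))\<^sup>2)) * norm h * norm w"
proof -
  define y where "y = yv x n s"
  define z where "z = Q (cn n) s *v P s h y"
  have r0: "0 \<le> r" using rho_nonneg[of s] assms by simp
  have rs: "rho s \<le> r" using assms by simp
  have c0: "cn n \<ge> 0" by (simp add: cn_def)
  have pr: "pi\<^sup>2 - r\<^sup>2 > 0" using assms r0 by (simp add: power_strict_mono)
  have c: "cn n > (rho s)\<^sup>2" by (rule cn_gt[OF rho_nonneg]) (use assms in auto)
  have cg: "cn n - (rho s)\<^sup>2 \<ge> pi\<^sup>2 - r\<^sup>2"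
  proof -
    have "cn n - (rho s)\<^sup>2 \<ge> (real (Suc n))\<^sup>2 * (pi\<^sup>2 - (rho s)\<^sup>2)"
      by (rule cn_gap[OF rho_nonneg]) (use assms in auto)
    moreover have "(real (Suc n))\<^sup>2 * (pi\<^sup>2 - (rho s)\<^sup>2) \<ge> pi\<^sup>2 - (rho s)\<^sup>2"
    proof -
      have "pi\<^sup>2 - (rho s)\<^sup>2 > 0" using assms rho_nonneg[of s] by (simp add: power_strict_mono)
      moreover have "(1::real) \<le> (real (Suc n))\<^sup>2" by simp
      ultimately show ?thesis using mult_right_mono[of 1 "(real (Suc n))\<^sup>2" "pi\<^sup>2 - (rho s)\<^sup>2"] by simp
    qed
    moreover have "(rho s)\<^sup>2 \<le> r\<^sup>2" using rs rho_nonneg[of s] by (intro power_mono) auto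
    ultimately show ?thesis by linarith
  qed
  have K0: "KA \<ge> 0" by (rule KA_nonneg)
  have Pw: "norm (P s w v) \<le> 2 * r * KA * norm w * norm v" for v
    by (rule order_trans[OF P_bound]) (use rs K0 in \<open>intro mult_right_mono; auto\<close>)
  have Ph: "norm (P s h y) \<le> 2 * r * KA * norm h * norm y"
    by (rule order_trans[OF P_bound]) (use rs K0 in \<open>intro mult_right_mono; auto\<close>)
  have nz: "norm z \<le> 2 * r * KA * norm h * norm y / (pi\<^sup>2 - r\<^sup>2)"
  proof -
    have "norm z \<le> norm (P s h y) / (cn n - (rho s)\<^sup>2)" unfolding z_def by (rule Q_bound[OF c])
    also have "\<dots> \<le> norm (P s h y) / (pi\<^sup>2 - r\<^sup>2)" using cg pr by (intro divide_left_mono) auto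
    also have "\<dots> \<le> 2 * r * KA * norm h * norm y / (pi\<^sup>2 - r\<^sup>2)" using Ph pr by (intro divide_right_mono) auto
    finally show ?thesis .
  qed
  have Phw: "norm (P h w y) \<le> 2 * KA * norm h * KA * norm w * norm y"
  proof -
    have "norm (P h w y) \<le> 2 * rho h * KA * norm w * norm y" by (rule P_bound)
    also have "\<dots> \<le> 2 * (KA * norm h) * KA * norm w * norm y"
      using rho_le[of h] K0 by (intro mult_right_mono) auto
    finally show ?thesis by (simp add: algebra_simps)
  qed
  define T where "T = (norm y)\<^sup>2 * norm h * norm w * KA\<^sup>2 * (8 * r\<^sup>2 / (pi\<^sup>2 - r\<^sup>2) + 2)"
  have t1: "\<bar>z \<bullet> P s w y\<bar> \<le> (norm y)\<^sup>2 * norm h * norm w * KA\<^sup>2 * (4 * r\<^sup>2 / (pi\<^sup>2 - r\<^sup>2))"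
  proof -
    have "\<bar>z \<bullet> P s w y\<bar> \<le> norm z * norm (P s w y)" by (rule Cauchy_Schwarz_ineq2)
    also have "\<dots> \<le> (2 * r * KA * norm h * norm y / (pi\<^sup>2 - r\<^sup>2)) * (2 * r * KA * norm w * norm y)"
      using pr r0 K0 by (intro mult_mono nz Pw) (auto intro!: divide_nonneg_pos mult_nonneg_nonneg)
    also have "\<dots> = (norm y)\<^sup>2 * norm h * norm w * KA\<^sup>2 * (4 * r\<^sup>2 / (pi\<^sup>2 - r\<^sup>2))"
      by (simp add: power2_eq_square field_simps)
    finally show ?thesis .
  qed
  have t2: "\<bar>y \<bullet> P h w y\<bar> \<le> (norm y)\<^sup>2 * norm h * norm w * KA\<^sup>2 * 2"
  proof -
    have "\<bar>y \<bullet> P h w y\<bar> \<le> norm y * norm (P h w y)" by (rule Cauchy_Schwarz_ineq2)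
    also have "\<dots> \<le> norm y * (2 * KA * norm h * KA * norm w * norm y)"
      by (intro mult_left_mono Phw) auto
    finally show ?thesis by (simp add: power2_eq_square algebra_simps)
  qed
  have t3: "\<bar>y \<bullet> P s w z\<bar> \<le> (norm y)\<^sup>2 * norm h * norm w * KA\<^sup>2 * (4 * r\<^sup>2 / (pi\<^sup>2 - r\<^sup>2))"
  proof -
    have "\<bar>y \<bullet> P s w z\<bar> \<le> norm y * norm (P s w z)" by (rule Cauchy_Schwarz_ineq2)
    also have "\<dots> \<le> norm y * (2 * r * KA * norm w * (2 * r * KA * norm h * norm y / (pi\<^sup>2 - r\<^sup>2)))"
      using r0 K0 by (intro mult_left_mono order_trans[OF Pw] mult_left_mono nz) auto
    also have "\<dots> = (norm y)\<^sup>2 * norm h * norm w * KA\<^sup>2 * (4 * r\<^sup>2 / (pi\<^sup>2 - r\<^sup>2))"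
      by (simp add: power2_eq_square field_simps)
    finally show ?thesis .
  qed
  have "\<bar>Bf x n s h w\<bar> = 2 * cn n * \<bar>z \<bullet> P s w y + y \<bullet> P h w y + y \<bullet> P s w z\<bar>"
    by (simp add: Bf_def y_def z_def abs_mult cn_def)
  also have "\<dots> \<le> 2 * cn n * T"
  proof -
    have "\<bar>z \<bullet> P s w y + y \<bullet> P h w y + y \<bullet> P s w z\<bar> \<le> \<bar>z \<bullet> P s w y\<bar> + \<bar>y \<bullet> P h w y\<bar> + \<bar>y \<bullet> P s w z\<bar>"
      by linarith
    also have "\<dots> \<le> T"
    proof -
      have "T = (norm y)\<^sup>2 * norm h * norm w * KA\<^sup>2 * (4 * r\<^sup>2 / (pi\<^sup>2 - r\<^sup>2))
              + (norm y)\<^sup>2 * norm h * norm w * KA\<^sup>2 * 2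
              + (norm y)\<^sup>2 * norm h * norm w * KA\<^sup>2 * (4 * r\<^sup>2 / (pi\<^sup>2 - r\<^sup>2))"
        unfolding T_def by (simp add: add_divide_distrib[symmetric] algebra_simps)
      then show ?thesis using t1 t2 t3 by linarith
    qed
    finally show ?thesis using c0 by (intro mult_left_mono) auto
  qed
  also have "\<dots> = (2 * KA\<^sup>2 * (8 * r\<^sup>2 / (pi\<^sup>2 - r\<^sup>2) + 2) * norm h * norm w) * (cn n * (norm y)\<^sup>2)"
    by (simp add: T_def algebra_simps)
  also have "\<dots> \<le> (2 * KA\<^sup>2 * (8 * r\<^sup>2 / (pi\<^sup>2 - r\<^sup>2) + 2) * norm h * norm w) * ((norm x)\<^sup>2 * W r * inverse ((real (Suc n))\<^sup>2))"
  proof -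
    have "0 \<le> 8 * r\<^sup>2 / (pi\<^sup>2 - r\<^sup>2)" using pr by simp
    then have "0 \<le> 2 * KA\<^sup>2 * (8 * r\<^sup>2 / (pi\<^sup>2 - r\<^sup>2) + 2) * norm h * norm w" by simp
    then show ?thesis unfolding y_def by (intro mult_left_mono ysq_bound[OF assms])
  qed
  finally show ?thesis by (simp add: algebra_simps)
qed

end

(* ---- Der4 ---- *)

context skewsys begin

lemma g1_summable:
  assumes "rho s < pi"
  shows "summable (\<lambda>n. g1 x n s h)"
proof -
  obtain r d where rd: "rho s < r" "r < pi" using good_ball[OF assms] by blast
  define D where "D n = (4 * r * KA * (norm x)\<^sup>2 * W r * norm h) * inverse ((real (Suc n))\<^sup>2)" for n
  have sD: "summable D" unfolding D_def by (intro summable_mult summable_inv_sq)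
  show ?thesis
  proof (rule summable_comparison_test'[OF sD])
    fix n
    show "norm (g1 x n s h) \<le> D n" using g1_bound[OF rd, of x n h] by (simp add: D_def algebra_simps)
  qed
qed

lemma Bf_summable:
  assumes "rho s < pi"
  shows "summable (\<lambda>n. Bf x n s h w)"
proof -
  obtain r d where rd: "rho s < r" "r < pi" using good_ball[OF assms] by blast
  define D where "D n = (2 * KA\<^sup>2 * (8 * r\<^sup>2 / (pi\<^sup>2 - r\<^sup>2) + 2) * (norm x)\<^sup>2 * W r * norm h * norm w)
     * inverse ((real (Suc n))\<^sup>2)" for n
  have sD: "summable D" unfolding D_def by (intro summable_mult summable_inv_sq)
  show ?thesis
  proof (rule summable_comparison_test'[OF sD])
    fix n
    show "norm (Bf x n s h w) \<le> D n" using Bf_bound[OF rd, of x n h w] by (simp add: D_def algebra_simps)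
  qed
qed

lemma F_deriv:
  assumes s: "rho s < pi"
  shows "((\<lambda>s. \<Sum>n. gf x n s) has_derivative (\<lambda>h. \<Sum>n. g1 x n s h)) (at s)"
proof -
  obtain r d where rd: "rho s < r" "r < pi" "d > 0" "\<And>s'. s' \<in> ball s d \<Longrightarrow> rho s' < r"
    using good_ball[OF s] by blast
  have r0: "0 \<le> r" using rd(1) rho_nonneg[of s] by linarith
  define D where "D n = 4 * r * KA * (norm x)\<^sup>2 * W r * inverse ((real (Suc n))\<^sup>2)" for n
  show ?thesis
  proof (rule series_has_derivative[where S = "ball s d" and x0 = s and D = D])
    show "open (ball s d)" "convex (ball s d)" "s \<in> ball s d" using rd by auto
    show "summable D" unfolding D_def by (intro summable_mult summable_inv_sq)
    show "D n \<ge> 0" for n unfolding D_def using r0 KA_nonneg W_nonneg[of r] by simp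
    fix n y assume y: "y \<in> ball s d"
    have ry: "rho y < r" by (rule rd(4)[OF y])
    have c: "cn n > (rho y)\<^sup>2" by (rule cn_gt[OF rho_nonneg]) (use ry rd in auto)
    show "(gf x n has_derivative g1 x n y) (at y)" by (rule gf_deriv[OF c])
    show "\<bar>g1 x n y h\<bar> \<le> D n * norm h" for h unfolding D_def by (rule g1_bound[OF ry rd(2)])
    show "summable (\<lambda>n. gf x n y)" by (rule gf_summable) (use ry rd in auto)
  qed (use rd in simp)
qed

lemma F1_deriv:
  assumes s: "rho s < pi"
  shows "((\<lambda>s. \<Sum>n. g1 x n s w) has_derivative (\<lambda>h. \<Sum>n. Bf x n s h w)) (at s)"
proof -
  obtain r d where rd: "rho s < r" "r < pi" "d > 0" "\<And>s'. s' \<in> ball s d \<Longrightarrow> rho s' < r"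
    using good_ball[OF s] by blast
  have r0: "0 \<le> r" using rd(1) rho_nonneg[of s] by linarith
  have pr: "pi\<^sup>2 - r\<^sup>2 > 0" using rd r0 by (simp add: power_strict_mono)
  define D where "D n = (2 * KA\<^sup>2 * (8 * r\<^sup>2 / (pi\<^sup>2 - r\<^sup>2) + 2) * (norm x)\<^sup>2 * W r
            * inverse ((real (Suc n))\<^sup>2)) * norm w" for n
  show ?thesis
  proof (rule series_has_derivative[where S = "ball s d" and x0 = s and D = D])
    show "open (ball s d)" "convex (ball s d)" "s \<in> ball s d" using rd by auto
    show "summable D" unfolding D_def by (intro summable_mult2 summable_mult summable_inv_sq)
    show "D n \<ge> 0" for n unfolding D_def using pr W_nonneg[of r] by simp
    fix n y assume y: "y \<in> ball s d"
    have ry: "rho y < r" by (rule rd(4)[OF y])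
    have c: "cn n > (rho y)\<^sup>2" by (rule cn_gt[OF rho_nonneg]) (use ry rd in auto)
    show "((\<lambda>s. g1 x n s w) has_derivative (\<lambda>h. Bf x n y h w)) (at y)" by (rule g1_deriv[OF c])
    show "\<bar>Bf x n y h w\<bar> \<le> D n * norm h" for h
      unfolding D_def using Bf_bound[OF ry rd(2), of x n h w] by (simp add: algebra_simps)
    show "summable (\<lambda>n. g1 x n y w)" by (rule g1_summable) (use ry rd in auto)
  qed (use rd in simp)
qed

end

(* ---- Main1 ---- *)

lemma det_nz_kernel:
  fixes H :: "real^'n^'n"
  shows "det H \<noteq> 0 \<longleftrightarrow> (\<forall>w. H *v w = 0 \<longrightarrow> w = 0)"
  by (simp add: invertible_det_nz[symmetric] invertible_left_inverse matrix_left_invertible_ker)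

lemma linear_sum_basis:
  fixes f :: "real^'n \<Rightarrow> real"
  assumes "linear f"
  shows "f w = (\<Sum>j\<in>UNIV. w $ j * f (axis j 1))"
proof -
  have "f w = f (\<Sum>j\<in>UNIV. (w $ j) *\<^sub>R axis j 1)"
    using basis_expansion[of w] by (simp add: scalar_mult_eq_scaleR)
  also have "\<dots> = (\<Sum>j\<in>UNIV. w $ j * f (axis j 1))"
    using assms by (simp add: linear_sum linear_scale)
  finally show ?thesis .
qed

context skewsys begin

lemma P_add1: "P (s1 + s2) w v = P s1 w v + P s2 w v"
  by (simp add: P_def A_add matrix_vector_mult_add_rdistrib matrix_vector_right_distrib algebra_simps)
lemma P_scale1: "P (k *\<^sub>R s) w v = k *\<^sub>R P s w v"
  by (simp add: P_def A_scale scaleR_matrix_vector_assoc[symmetric] matrix_vector_mult_scaleR algebra_simps)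

lemma g1_linear: "linear (\<lambda>w. g1 x n s w)"
  by (intro linearI) (simp_all add: g1_def P_add2 P_scale2 inner_add_right algebra_simps)

lemma Bf_linear_w: "linear (\<lambda>w. Bf x n s h w)"
  by (intro linearI)
     (simp_all add: Bf_def P_add2 P_scale2 matrix_vector_right_distrib matrix_vector_mult_scaleR
        inner_add_right inner_add_left algebra_simps)

lemma Bf_linear_h: "linear (\<lambda>h. Bf x n s h w)"
  by (intro linearI)
     (simp_all add: Bf_def P_add1 P_scale1 P_add2 P_scale2 P_add3 P_scale3 matrix_vector_right_distrib
        matrix_vector_mult_scaleR inner_add_right inner_add_left algebra_simps)

definition Phi1 :: "real^'q \<Rightarrow> real^'m \<Rightarrow> real^'m \<Rightarrow> real^'m \<Rightarrow> real" where
  "Phi1 x t s w = (\<Sum>n. g1 x n s w) + 4 * (t \<bullet> w)"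
definition HB :: "real^'q \<Rightarrow> real^'m \<Rightarrow> real^'m \<Rightarrow> real^'m \<Rightarrow> real" where
  "HB x s h w = (\<Sum>n. Bf x n s h w)"

lemma Phi1_linear: "rho s < pi \<Longrightarrow> linear (\<lambda>w. Phi1 x t s w)"
proof (intro linearI)
  assume r: "rho s < pi"
  fix a b :: "real^'m" and k :: real
  show "Phi1 x t s (a + b) = Phi1 x t s a + Phi1 x t s b"
    using suminf_add[OF g1_summable[OF r, of x a] g1_summable[OF r, of x b]]
      linear_add[OF g1_linear] by (simp add: Phi1_def inner_add_right algebra_simps)
  show "Phi1 x t s (k *\<^sub>R a) = k *\<^sub>R Phi1 x t s a"
    using suminf_mult[OF g1_summable[OF r, of x a], of k]
      linear_scale[OF g1_linear] by (simp add: Phi1_def algebra_simps)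
qed

lemma HB_linear_w: "rho s < pi \<Longrightarrow> linear (\<lambda>w. HB x s h w)"
proof (intro linearI)
  assume r: "rho s < pi"
  fix a b :: "real^'m" and k :: real
  show "HB x s h (a + b) = HB x s h a + HB x s h b"
    using suminf_add[OF Bf_summable[OF r, of x h a] Bf_summable[OF r, of x h b]]
      linear_add[OF Bf_linear_w] by (simp add: HB_def)
  show "HB x s h (k *\<^sub>R a) = k *\<^sub>R HB x s h a"
    using suminf_mult[OF Bf_summable[OF r, of x h a], of k]
      linear_scale[OF Bf_linear_w] by (simp add: HB_def)
qed

lemma HB_linear_h: "rho s < pi \<Longrightarrow> linear (\<lambda>h. HB x s h w)"
proof (intro linearI)
  assume r: "rho s < pi"
  fix a b :: "real^'m" and k :: real
  show "HB x s (a + b) w = HB x s a w + HB x s b w"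
    using suminf_add[OF Bf_summable[OF r, of x a w] Bf_summable[OF r, of x b w]]
      linear_add[OF Bf_linear_h] by (simp add: HB_def)
  show "HB x s (k *\<^sub>R a) w = k *\<^sub>R HB x s a w"
    using suminf_mult[OF Bf_summable[OF r, of x a w], of k]
      linear_scale[OF Bf_linear_h] by (simp add: HB_def)
qed

lemma Bf_diag:
  assumes c: "cn n > (rho s)\<^sup>2"
  shows "Bf x n s w w = -2 * cn n * (2 * ((Q (cn n) s *v P s w (yv x n s)) \<bullet> P s w (yv x n s))
                 + 2 * ((A w *v yv x n s) \<bullet> (A w *v yv x n s)))"
proof -
  define y where "y = yv x n s"
  define z where "z = P s w y"
  have "y \<bullet> P s w (Q (cn n) s *v z) = z \<bullet> (Q (cn n) s *v z)" using P_sym[of s w y] by (simp add: z_def)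
  also have "\<dots> = (Q (cn n) s *v z) \<bullet> z" by (simp add: inner_commute)
  finally have "y \<bullet> P s w (Q (cn n) s *v z) = (Q (cn n) s *v z) \<bullet> z" .
  then show ?thesis
    by (simp add: Bf_def y_def[symmetric] z_def[symmetric] P_dot_self algebra_simps)
qed

definition Zc :: "real^'q \<Rightarrow> real^'m \<Rightarrow> real^'m \<Rightarrow> bool" where
  "Zc x s w \<longleftrightarrow> (\<forall>n. A w *v yv x n s = 0 \<and> P s w (yv x n s) = 0)"

lemma Bf_nonpos:
  assumes c: "cn n > (rho s)\<^sup>2"
  shows "Bf x n s w w \<le> 0"
proof -
  have "(Q (cn n) s *v P s w (yv x n s)) \<bullet> P s w (yv x n s) \<ge> 0"
    by (rule order_trans[OF _ Q_pos[OF c]]) (use c in simp)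
  moreover have "cn n \<ge> 0" by (simp add: cn_def)
  ultimately show ?thesis unfolding Bf_diag[OF c] by (simp add: mult_nonneg_nonneg)
qed

lemma HB_zero_Zc:
  assumes r: "rho s < pi" and h: "HB x s w w = 0"
  shows "Zc x s w"
  unfolding Zc_def
proof
  fix n
  have r0: "0 \<le> rho s" by (rule rho_nonneg)
  have c: "\<And>n. cn n > (rho s)\<^sup>2" by (rule cn_gt[OF r0 r])
  have "(\<lambda>n. - Bf x n s w w) sums 0"
  proof -
    have "(\<lambda>n. Bf x n s w w) sums 0" using h Bf_summable[OF r, of x w w] by (simp add: HB_def sums_iff)
    then show ?thesis using sums_minus by fastforce
  qed
  then have "\<forall>n. - Bf x n s w w = 0"
    using sums_unique[of "\<lambda>n. - Bf x n s w w"] suminf_eq_zero_iff[of "\<lambda>n. - Bf x n s w w"]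
      Bf_nonpos[OF c] by (auto simp: sums_iff)
  then have B0: "Bf x n s w w = 0" by simp
  define y where "y = yv x n s"
  define z where "z = P s w y"
  have q: "(Q (cn n) s *v z) \<bullet> z \<ge> 0"
    by (rule order_trans[OF _ Q_pos[OF c]]) (use c[of n] in simp)
  have a: "(A w *v y) \<bullet> (A w *v y) \<ge> 0" by simp
  have cp: "cn n > 0" by (simp add: cn_def)
  from B0 have "2 * ((Q (cn n) s *v z) \<bullet> z) + 2 * ((A w *v y) \<bullet> (A w *v y)) = 0"
    unfolding Bf_diag[OF c] y_def[symmetric] z_def[symmetric] using cp by simp
  then have "(Q (cn n) s *v z) \<bullet> z = 0" "(A w *v y) \<bullet> (A w *v y) = 0" using q a by linarith+
  then show "A w *v yv x n s = 0 \<and> P s w (yv x n s) = 0"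
    using Q_pos_zero[OF c] by (auto simp: y_def z_def)
qed

lemma Zc_Bf: "Zc x s w \<Longrightarrow> Bf x n s v w = 0"
proof -
  assume Z: "Zc x s w"
  define y where "y = yv x n s"
  have Ay: "A w *v y = 0" and Py: "P s w y = 0" using Z by (auto simp: Zc_def y_def)
  have 1: "y \<bullet> P s w u = 0" for u using P_sym[of s w y u] Py by simp
  have 2: "y \<bullet> P v w y = 0" using P_dot_self[of y v w] Ay by simp
  show ?thesis by (simp add: Bf_def y_def[symmetric] Py 1 2)
qed

lemma Zc_g1: "Zc x s w \<Longrightarrow> g1 x n s w = 0"
  by (simp add: Zc_def g1_def)

lemma Zc_HB: "Zc x s w \<Longrightarrow> HB x s v w = 0"
  by (simp add: HB_def Zc_Bf)

lemma Zc_shift: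
  assumes Z: "Zc x s w" and r: "rho (s + u *\<^sub>R w) < pi" and rs: "rho s < pi"
  shows "yv x n (s + u *\<^sub>R w) = yv x n s" "Zc x (s + u *\<^sub>R w) w"
proof -
  have Ay: "\<And>n. A w *v yv x n s = 0" and Py: "\<And>n. P s w (yv x n s) = 0" using Z by (auto simp: Zc_def)
  have c: "\<And>n. cn n > (rho (s + u *\<^sub>R w))\<^sup>2" by (rule cn_gt[OF rho_nonneg r])
  have cs: "\<And>n. cn n > (rho s)\<^sup>2" by (rule cn_gt[OF rho_nonneg rs])
  have yeq: "yv x k (s + u *\<^sub>R w) = yv x k s" for k
  proof -
    define y where "y = yv x k s"
    have Muw: "M (u *\<^sub>R w) *v y = 0"
      by (simp add: Mv A_scale scaleR_matrix_vector_assoc[symmetric] matrix_vector_mult_scaleR Ay y_def)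
    have Puw: "P s (u *\<^sub>R w) y = 0" by (simp add: P_scale2 Py y_def)
    have Meq: "M (s + u *\<^sub>R w) *v y = M s *v y" unfolding M_add Muw Puw by simp
    have "(cn k *\<^sub>R mat 1 - M (s + u *\<^sub>R w)) *v y = (cn k *\<^sub>R mat 1 - M s) *v y"
      unfolding K_mv Meq ..
    also have "\<dots> = x" using Q_left[OF cs[of k], of x] by (simp add: y_def yv_def)
    finally have "Q (cn k) (s + u *\<^sub>R w) *v x = y" by (rule Q_eq[OF c[of k]])
    then show ?thesis by (simp add: yv_def y_def)
  qed
  then show "yv x n (s + u *\<^sub>R w) = yv x n s" .
  show "Zc x (s + u *\<^sub>R w) w"
    unfolding Zc_def
  proof
    fix k
    have "P w w (yv x k s) = 0" by (simp add: P_def Ay)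
    then show "A w *v yv x k (s + u *\<^sub>R w) = 0 \<and> P (s + u *\<^sub>R w) w (yv x k (s + u *\<^sub>R w)) = 0"
      by (simp add: yeq Ay P_add1 P_scale1 Py)
  qed
qed

end

(* ---- Main2 ---- *)

lemma line_deriv:
  fixes f :: "'a::real_normed_vector \<Rightarrow> real"
  assumes "(f has_derivative f') (at (a + u0 *\<^sub>R w))"
  shows "((\<lambda>u. f (a + u *\<^sub>R w)) has_real_derivative f' w) (at u0)"
proof -
  have l: "((\<lambda>u. a + u *\<^sub>R w) has_derivative (\<lambda>u. u *\<^sub>R w)) (at u0)"
    by (auto intro!: derivative_eq_intros)
  have bl: "bounded_linear f'" using assms by (rule has_derivative_bounded_linear)
  have "((\<lambda>u. f (a + u *\<^sub>R w)) has_derivative (\<lambda>u. f' (u *\<^sub>R w))) (at u0)"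
    using has_derivative_compose[OF l assms] by (simp add: o_def)
  moreover have "(\<lambda>u. f' (u *\<^sub>R w)) = (\<lambda>u. f' w * u)"
    using linear_scale[OF bounded_linear.linear[OF bl]] by (auto simp: fun_eq_iff mult.commute)
  ultimately show ?thesis by (simp add: has_field_derivative_def)
qed

lemma partial_of_deriv:
  assumes "(f has_derivative f') (at a)"
  shows "partial f i a = f' (axis i 1)"
proof -
  have "((\<lambda>u. f (a + u *\<^sub>R axis i 1)) has_real_derivative f' (axis i 1)) (at 0)"
    by (rule line_deriv) (use assms in simp)
  then show ?thesis unfolding partial_def by (rule DERIV_imp_deriv)
qed

lemma Umat_add:
  fixes Us :: "'m::finite \<Rightarrow> real^'q::finite^'q"
  shows "Umat Us (a + b) = Umat Us a + Umat Us b"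
proof -
  have "Complex 0 (x + y) = Complex 0 x + Complex 0 y" for x y by (simp add: complex_eq_iff)
  then show ?thesis by (simp add: Umat_def vec_eq_iff distrib_right sum.distrib)
qed

lemma Umat_scale:
  fixes Us :: "'m::finite \<Rightarrow> real^'q::finite^'q"
  shows "Umat Us (k *\<^sub>R a) = k *\<^sub>R Umat Us a"
proof -
  have "Complex 0 (k * y) = k *\<^sub>R Complex 0 y" for y by (simp add: complex_eq_iff)
  then show ?thesis by (simp add: Umat_def vec_eq_iff scaleR_sum_right)
qed

lemma scaleR_mv_c: "(k *\<^sub>R X) *v v = k *\<^sub>R (X *v (v::'a::real_algebra_1^'n))"
  by (simp add: matrix_vector_mult_def vec_eq_iff scaleR_sum_right)

lemma onorm_U_convex:
  fixes Us :: "'m::finite \<Rightarrow> real^'q::finite^'q"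
  shows "convex_on UNIV (\<lambda>s. onorm ((*v) (Umat Us s)))"
proof (rule convex_onI)
  fix u :: real and a b :: "real^'m" assume u: "u > 0" "u < 1"
  have e: "(*v) (Umat Us ((1 - u) *\<^sub>R a + u *\<^sub>R b)) = (\<lambda>v. (1 - u) *\<^sub>R (Umat Us a *v v) + u *\<^sub>R (Umat Us b *v v))"
    by (rule ext) (simp add: Umat_add Umat_scale matrix_vector_mult_add_rdistrib scaleR_mv_c)
  have "onorm (\<lambda>v. (1 - u) *\<^sub>R (Umat Us a *v v) + u *\<^sub>R (Umat Us b *v v))
      \<le> onorm (\<lambda>v. (1 - u) *\<^sub>R (Umat Us a *v v)) + onorm (\<lambda>v. u *\<^sub>R (Umat Us b *v v))"
    by (rule onorm_triangle) (auto intro: bounded_linear_scaleR_right[THEN bounded_linear_compose] simp: bounded_linear_compose[OF bounded_linear_scaleR_right])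
  also have "\<dots> = (1 - u) * onorm ((*v) (Umat Us a)) + u * onorm ((*v) (Umat Us b))"
    using u by (simp add: onorm_scaleR)
  finally show "onorm ((*v) (Umat Us ((1 - u) *\<^sub>R a + u *\<^sub>R b)))
      \<le> (1 - u) * onorm ((*v) (Umat Us a)) + u * onorm ((*v) (Umat Us b))" unfolding e .
qed simp

lemma Omega_open:
  fixes Us :: "'m::finite \<Rightarrow> real^'q::finite^'q"
  shows "open (Omega Us)"
proof -
  have c: "continuous_on UNIV (\<lambda>s. onorm ((*v) (Umat Us s)))"
    by (rule convex_on_continuous[OF open_UNIV onorm_U_convex])
  have "Omega Us = (\<lambda>s. onorm ((*v) (Umat Us s))) -` {..<pi}"
    by (auto simp: Omega_def)
  then show ?thesis using open_vimage[OF open_lessThan c] by simp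
qed

lemma Omega_convex:
  fixes Us :: "'m::finite \<Rightarrow> real^'q::finite^'q"
  shows "convex (Omega Us)"
proof (rule convexI)
  fix a b :: "real^'m" and u v :: real
  assume a: "a \<in> Omega Us" and b: "b \<in> Omega Us" and uv: "0 \<le> u" "0 \<le> v" "u + v = 1"
  have "onorm ((*v) (Umat Us (u *\<^sub>R a + v *\<^sub>R b))) \<le> u * onorm ((*v) (Umat Us a)) + v * onorm ((*v) (Umat Us b))"
    using onorm_U_convex uv unfolding convex_on_def by blast
  also have "\<dots> < pi"
  proof (cases "u = 0")
    case True then show ?thesis using b uv by (simp add: Omega_def)
  next
    case False
    then have "u * onorm ((*v) (Umat Us a)) < u * pi" using a uv by (simp add: Omega_def)
    moreover have "v * onorm ((*v) (Umat Us b)) \<le> v * pi" using b uv by (intro mult_left_mono) (auto simp: Omega_def)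
    ultimately have "u * onorm ((*v) (Umat Us a)) + v * onorm ((*v) (Umat Us b)) < u * pi + v * pi" by linarith
    also have "u * pi + v * pi = pi" using uv(3) by (metis distrib_right mult_1)
    finally show ?thesis .
  qed
  finally show "u *\<^sub>R a + v *\<^sub>R b \<in> Omega Us" by (simp add: Omega_def)
qed

context skewsys begin

lemma rho_le_U: "rho s \<le> onorm ((*v) (Umat Us s))"
  unfolding rho_def
proof (rule onorm_le)
  fix v :: "real^'q"
  have "(Umat Us s *v vemb v) $ a = \<i> * complex_of_real ((A s *v v) $ a)" for a
  proof -
    have "(Umat Us s *v vemb v) $ a = (\<Sum>b\<in>UNIV. (\<i> * complex_of_real (A s $ a $ b)) * complex_of_real (v $ b))"
      by (simp add: Umat_eq vemb_def matrix_vector_mult_def)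
    also have "\<dots> = \<i> * (\<Sum>b\<in>UNIV. complex_of_real (A s $ a $ b * v $ b))"
      by (simp add: sum_distrib_left mult.assoc)
    also have "\<dots> = \<i> * complex_of_real ((A s *v v) $ a)"
      by (simp add: matrix_vector_mult_def)
    finally show ?thesis .
  qed
  then have "Umat Us s *v vemb v = (\<chi> a. \<i> * complex_of_real ((A s *v v) $ a))"
    by (simp add: vec_eq_iff)
  then have "norm (Umat Us s *v vemb v) = norm (A s *v v)"
    by (simp add: norm_vec_def L2_set_def norm_mult)
  moreover have "norm (Umat Us s *v vemb v) \<le> onorm ((*v) (Umat Us s)) * norm (vemb v)"
    by (rule onorm) simp
  ultimately show "norm (A s *v v) \<le> onorm ((*v) (Umat Us s)) * norm v" by (simp add: norm_vemb)
qed

lemma Omega_rho: "s \<in> Omega Us \<Longrightarrow> rho s < pi"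
  using rho_le_U[of s] by (simp add: Omega_def)

lemma phi_deriv:
  assumes s: "s \<in> Omega Us"
  shows "(phi Us x t has_derivative Phi1 x t s) (at s)"
proof -
  have r: "rho s < pi" by (rule Omega_rho[OF s])
  have "((\<lambda>s. x \<bullet> x + (\<Sum>n. gf x n s) + 4 * (t \<bullet> s)) has_derivative
        (\<lambda>h. 0 + (\<Sum>n. g1 x n s h) + 4 * (t \<bullet> h))) (at s)"
    by (intro has_derivative_add has_derivative_const F_deriv[OF r] has_derivative_mult_right
        has_derivative_inner_right has_derivative_ident)
  then have "((\<lambda>s. x \<bullet> x + (\<Sum>n. gf x n s) + 4 * (t \<bullet> s)) has_derivative Phi1 x t s) (at s)"
    by (simp add: Phi1_def[abs_def])
  then show ?thesis
    by (rule has_derivative_transform_within_open[OF _ Omega_open s])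
       (simp add: phi_eq[OF Omega_rho])
qed

lemma Phi1_deriv:
  assumes s: "s \<in> Omega Us"
  shows "((\<lambda>s. Phi1 x t s w) has_derivative (\<lambda>h. HB x s h w)) (at s)"
proof -
  have r: "rho s < pi" by (rule Omega_rho[OF s])
  have "((\<lambda>s. (\<Sum>n. g1 x n s w) + 4 * (t \<bullet> w)) has_derivative (\<lambda>h. (\<Sum>n. Bf x n s h w) + 0)) (at s)"
    by (intro has_derivative_add has_derivative_const F1_deriv[OF r])
  then show ?thesis by (simp add: Phi1_def[abs_def] HB_def)
qed

lemma partial_phi:
  assumes s: "s \<in> Omega Us"
  shows "partial (phi Us x t) i s = Phi1 x t s (axis i 1)"
  by (rule partial_of_deriv[OF phi_deriv[OF s]])

lemma hess_phi:
  assumes s: "s \<in> Omega Us"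
  shows "hess (phi Us x t) s $ i $ j = HB x s (axis i 1) (axis j 1)"
proof -
  have "((\<lambda>\<sigma>. partial (phi Us x t) j \<sigma>) has_derivative (\<lambda>h. HB x s h (axis j 1))) (at s)"
    by (rule has_derivative_transform_within_open[OF Phi1_deriv[OF s] Omega_open s])
       (simp add: partial_phi)
  then show ?thesis unfolding hess_def by (simp add: partial_of_deriv)
qed

end

(* ---- Final ---- *)

lemma deriv_const_on:
  fixes f :: "real \<Rightarrow> real"
  assumes "\<And>u. u \<in> {a<..<b} \<Longrightarrow> f u = C" "u0 \<in> {a<..<b}" "(f has_real_derivative D) (at u0)"
  shows "D = 0"
proof -
  have "((\<lambda>_. C) has_real_derivative 0) (at u0)" by simp
  then have "(f has_real_derivative 0) (at u0)"
    by (rule has_field_derivative_transform_within_open[OF _ open_greaterThanLessThan assms(2)])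
       (use assms(1) in auto)
  then show ?thesis using DERIV_unique assms(3) by blast
qed

context skewsys begin

lemma hess_mv:
  assumes s: "s \<in> Omega Us"
  shows "(hess (phi Us x t) s *v w) $ i = HB x s (axis i 1) w"
proof -
  have "(hess (phi Us x t) s *v w) $ i = (\<Sum>j\<in>UNIV. HB x s (axis i 1) (axis j 1) * w $ j)"
    by (simp add: matrix_vector_mult_def hess_phi[OF s])
  also have "\<dots> = HB x s (axis i 1) w"
    using linear_sum_basis[OF HB_linear_w[OF Omega_rho[OF s]], of x "axis i 1" w]
    by (simp add: mult.commute)
  finally show ?thesis .
qed

lemma hess_ker_HB:
  assumes s: "s \<in> Omega Us" and k: "hess (phi Us x t) s *v w = 0"
  shows "HB x s w w = 0"
proof -
  have "HB x s w w = (\<Sum>i\<in>UNIV. w $ i * HB x s (axis i 1) w)"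
    by (rule linear_sum_basis[OF HB_linear_h[OF Omega_rho[OF s]]])
  also have "\<dots> = 0" using hess_mv[OF s, of x t w] k by simp
  finally show ?thesis .
qed

lemma Zc_hess:
  assumes s: "s \<in> Omega Us" and Z: "Zc x s w"
  shows "hess (phi Us x t) s *v w = 0"
  using hess_mv[OF s] Zc_HB[OF Z] by (simp add: vec_eq_iff)

lemma Phi1_zero:
  assumes s: "s \<in> Omega Us" and p: "\<forall>i. partial (phi Us x t) i s = 0"
  shows "Phi1 x t s w = 0"
proof -
  have "Phi1 x t s w = (\<Sum>j\<in>UNIV. w $ j * Phi1 x t s (axis j 1))"
    by (rule linear_sum_basis[OF Phi1_linear[OF Omega_rho[OF s]]])
  also have "\<dots> = 0" using p partial_phi[OF s] by simp
  finally show ?thesis .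
qed

lemma HB_nonpos:
  assumes r: "rho s < pi"
  shows "HB x s w w \<le> 0"
proof -
  have c: "\<And>n. cn n > (rho s)\<^sup>2" by (rule cn_gt[OF rho_nonneg r])
  have "(\<Sum>n. Bf x n s w w) \<le> (\<Sum>n. (0::real))"
    by (rule suminf_le[OF _ Bf_summable[OF r]]) (simp_all add: Bf_nonpos[OF c])
  then show ?thesis by (simp add: HB_def)
qed

lemma line1:
  assumes "s + u *\<^sub>R w \<in> Omega Us"
  shows "((\<lambda>u. phi Us x t (s + u *\<^sub>R w)) has_real_derivative Phi1 x t (s + u *\<^sub>R w) w) (at u)"
  by (rule line_deriv[OF phi_deriv[OF assms]])

lemma line2:
  assumes "s + u *\<^sub>R w \<in> Omega Us"
  shows "((\<lambda>u. Phi1 x t (s + u *\<^sub>R w) w) has_real_derivative HB x (s + u *\<^sub>R w) w w) (at u)"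
  by (rule line_deriv[OF Phi1_deriv[OF assms]])

lemma Zc_phi:
  assumes s: "s \<in> Omega Us" and Z: "Zc x s w" and su: "s + u *\<^sub>R w \<in> Omega Us"
  shows "phi Us x t (s + u *\<^sub>R w) = phi Us x t s + 4 * u * (t \<bullet> w)"
proof -
  have r: "rho s < pi" and ru: "rho (s + u *\<^sub>R w) < pi" using Omega_rho s su by auto
  have "gf x n (s + u *\<^sub>R w) = gf x n s" for n
    using Zc_shift(1)[OF Z ru r, of n] by (simp add: gf_def yv_def)
  then show ?thesis
    unfolding phi_eq[OF r] phi_eq[OF ru] by (simp add: inner_add_right algebra_simps)
qed

lemma seg_in:
  assumes "a \<in> Omega Us" "b \<in> Omega Us" "0 \<le> u" "u \<le> 1"
  shows "a + u *\<^sub>R (b - a) \<in> Omega Us"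
proof -
  have "a + u *\<^sub>R (b - a) = (1 - u) *\<^sub>R a + u *\<^sub>R b" by (simp add: algebra_simps)
  then show ?thesis using Omega_convex[of Us] assms unfolding convex_def by simp
qed

lemma seg_mono:
  assumes th: "th \<in> Omega Us" and tau: "tau \<in> Omega Us" and P0: "Phi1 x t th (tau - th) = 0"
    and ab: "0 \<le> a" "a \<le> b" "b \<le> 1"
  shows "phi Us x t (th + b *\<^sub>R (tau - th)) \<le> phi Us x t (th + a *\<^sub>R (tau - th))"
proof -
  define w where "w = tau - th"
  have inS: "th + u *\<^sub>R w \<in> Omega Us" if "0 \<le> u" "u \<le> 1" for u
    unfolding w_def by (rule seg_in[OF th tau that])
  have k: "Phi1 x t (th + u *\<^sub>R w) w \<le> 0" if "0 \<le> u" "u \<le> 1" for u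
  proof -
    have "Phi1 x t (th + u *\<^sub>R w) w \<le> Phi1 x t (th + 0 *\<^sub>R w) w"
    proof (rule DERIV_nonpos_imp_nonincreasing[of 0 u "\<lambda>u. Phi1 x t (th + u *\<^sub>R w) w"])
      show "0 \<le> u" by fact
      fix v assume "0 \<le> v" "v \<le> u"
      then have vS: "th + v *\<^sub>R w \<in> Omega Us" using inS that by auto
      show "\<exists>y. ((\<lambda>u. Phi1 x t (th + u *\<^sub>R w) w) has_real_derivative y) (at v) \<and> y \<le> 0"
        using line2[OF vS] HB_nonpos[OF Omega_rho[OF vS]] by blast
    qed
    then show ?thesis using P0 by (simp add: w_def)
  qed
  show ?thesis unfolding w_def[symmetric]
  proof (rule DERIV_nonpos_imp_nonincreasing[of a b "\<lambda>u. phi Us x t (th + u *\<^sub>R w)"])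
    show "a \<le> b" by fact
    fix v assume v: "a \<le> v" "v \<le> b"
    then have vS: "th + v *\<^sub>R w \<in> Omega Us" using inS ab by auto
    show "\<exists>y. ((\<lambda>u. phi Us x t (th + u *\<^sub>R w)) has_real_derivative y) (at v) \<and> y \<le> 0"
      using line1[OF vS] k[of v] v ab by auto
  qed
qed

end

theorem theorem2p4:
  fixes Us :: "'m::finite \<Rightarrow> real^'q::finite^'q"
    and x :: "real^'q" and t :: "real^'m"
  assumes skew: "\<forall>j. transpose (Us j) = - Us j"
    and indep: "\<forall>c::'m \<Rightarrow> real. (\<Sum>j\<in>UNIV. c j *\<^sub>R Us j) = 0 \<longrightarrow> (\<forall>j. c j = 0)"
  shows "(\<exists>\<theta>\<in>Omega Us. (\<forall>i. partial (phi Us x t) i \<theta> = 0)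
                        \<and> det (hess (phi Us x t) \<theta>) \<noteq> 0)
     \<longleftrightarrow> (\<exists>\<theta>. {\<theta>'\<in>Omega Us. \<forall>\<tau>\<in>Omega Us. phi Us x t \<tau> \<le> phi Us x t \<theta>'} = {\<theta>})"
proof -
  interpret skewsys Us using skew by unfold_locales
  let ?f = "phi Us x t"
  let ?S = "{\<theta>'\<in>Omega Us. \<forall>\<tau>\<in>Omega Us. ?f \<tau> \<le> ?f \<theta>'}"
  show ?thesis
  proof
    assume "\<exists>\<theta>\<in>Omega Us. (\<forall>i. partial ?f i \<theta> = 0) \<and> det (hess ?f \<theta>) \<noteq> 0"
    then obtain th where th: "th \<in> Omega Us" and p: "\<forall>i. partial ?f i th = 0"
      and dt: "det (hess ?f th) \<noteq> 0" by blast
    have P0: "Phi1 x t th w = 0" for w by (rule Phi1_zero[OF th p])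
    have max: "?f tau \<le> ?f th" if tau: "tau \<in> Omega Us" for tau
      using seg_mono[OF th tau P0, of 0 1] by simp
    have "?S = {th}"
    proof
      show "{th} \<subseteq> ?S" using th max by auto
      show "?S \<subseteq> {th}"
      proof
        fix th' assume "th' \<in> ?S"
        then have th': "th' \<in> Omega Us" and m': "\<forall>\<tau>\<in>Omega Us. ?f \<tau> \<le> ?f th'" by auto
        show "th' \<in> {th}"
        proof (rule ccontr)
          assume "th' \<notin> {th}"
          define w where "w = th' - th"
          have wnz: "w \<noteq> 0" using \<open>th' \<notin> {th}\<close> by (simp add: w_def)
          have e1: "th + 1 *\<^sub>R w = th'" by (simp add: w_def)
          have const: "?f (th + u *\<^sub>R w) = ?f th" if "u \<in> {0<..<1}" for u
          proof -
            have "?f (th + u *\<^sub>R w) \<le> ?f (th + 0 *\<^sub>R w)"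
              using seg_mono[OF th th' P0, of 0 u] that by (simp add: w_def)
            moreover have "?f (th + 1 *\<^sub>R w) \<le> ?f (th + u *\<^sub>R w)"
              using seg_mono[OF th th' P0, of u 1] that by (simp add: w_def)
            moreover have "?f th \<le> ?f th'" using m' th by blast
            ultimately show ?thesis using e1 by simp
          qed
          have inS: "th + u *\<^sub>R w \<in> Omega Us" if "0 \<le> u" "u \<le> 1" for u
            unfolding w_def by (rule seg_in[OF th th' that])
          have k0: "Phi1 x t (th + u *\<^sub>R w) w = 0" if "u \<in> {0<..<1}" for u
            by (rule deriv_const_on[OF const that line1[OF inS]]) (use that in auto)
          define sm where "sm = th + (1/2) *\<^sub>R w"
          have smS: "sm \<in> Omega Us" unfolding sm_def by (rule inS) auto
          have "HB x sm w w = 0"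
            unfolding sm_def
            by (rule deriv_const_on[OF k0 _ line2[OF inS]]) auto
          then have Z: "Zc x sm w" by (rule HB_zero_Zc[OF Omega_rho[OF smS]])
          have eth: "sm + (- 1/2) *\<^sub>R w = th" by (simp add: sm_def algebra_simps)
          have "Zc x (sm + (- 1/2) *\<^sub>R w) w"
            by (rule Zc_shift(2)[OF Z]) (use eth th Omega_rho smS in auto)
          then have "Zc x th w" using eth by simp
          then have "hess ?f th *v w = 0" by (rule Zc_hess[OF th])
          then show False using dt wnz det_nz_kernel by blast
        qed
      qed
    qed
    then show "\<exists>\<theta>. ?S = {\<theta>}" by blast
  next
    assume "\<exists>\<theta>. ?S = {\<theta>}"
    then obtain th where S: "?S = {th}" by blast
    then have th: "th \<in> Omega Us" and m: "\<forall>\<tau>\<in>Omega Us. ?f \<tau> \<le> ?f th" by auto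
    obtain d where d: "d > 0" "ball th d \<subseteq> Omega Us"
      using Omega_open th by (meson open_contains_ball)
    have p: "\<forall>i. partial ?f i th = 0"
    proof
      fix i
      have "((\<lambda>u. ?f (th + u *\<^sub>R axis i 1)) has_real_derivative Phi1 x t (th + 0 *\<^sub>R axis i 1) (axis i 1)) (at 0)"
        by (rule line1) (simp add: th)
      moreover have "\<forall>y. \<bar>0 - y\<bar> < d \<longrightarrow> ?f (th + y *\<^sub>R axis i 1) \<le> ?f (th + 0 *\<^sub>R axis i 1)"
      proof (intro allI impI)
        fix y :: real assume "\<bar>0 - y\<bar> < d"
        then have "th + y *\<^sub>R axis i 1 \<in> ball th d" by (simp add: dist_norm)
        then show "?f (th + y *\<^sub>R axis i 1) \<le> ?f (th + 0 *\<^sub>R axis i 1)" using d m by auto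
      qed
      ultimately have "Phi1 x t th (axis i 1) = 0" using DERIV_local_max[OF _ d(1)] by simp
      then show "partial ?f i th = 0" by (simp add: partial_phi[OF th])
    qed
    have "det (hess ?f th) \<noteq> 0"
    proof (rule ccontr)
      assume "\<not> det (hess ?f th) \<noteq> 0"
      then obtain w where k: "hess ?f th *v w = 0" and wnz: "w \<noteq> 0" using det_nz_kernel by blast
      have "HB x th w w = 0" by (rule hess_ker_HB[OF th k])
      then have Z: "Zc x th w" by (rule HB_zero_Zc[OF Omega_rho[OF th]])
      have "Phi1 x t th w = 0" by (rule Phi1_zero[OF th p])
      moreover have "Phi1 x t th w = 4 * (t \<bullet> w)" using Zc_g1[OF Z] by (simp add: Phi1_def)
      ultimately have tw: "t \<bullet> w = 0" by simp
      define u where "u = d / (2 * norm w)"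
      have u: "u > 0" using d wnz by (simp add: u_def)
      have "norm (u *\<^sub>R w) < d" using d wnz by (simp add: u_def)
      then have uS: "th + u *\<^sub>R w \<in> Omega Us" using d by (auto simp: dist_norm)
      have "?f (th + u *\<^sub>R w) = ?f th" using Zc_phi[OF th Z uS] tw by simp
      then have "th + u *\<^sub>R w \<in> ?S" using uS m by auto
      then have "th + u *\<^sub>R w = th" using S by auto
      then show False using u wnz by simp
    qed
    then show "\<exists>\<theta>\<in>Omega Us. (\<forall>i. partial ?f i \<theta> = 0) \<and> det (hess ?f \<theta>) \<noteq> 0"
      using th p by blast
  qed
qed


end
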